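(* The category $\mathrm{SubNeck}(\square^n)$ is a poset. It is in bijection (as a poset) with the poset of ordered partitions of $\{1,\dots,n\}$ ordered by the inverse refinement order $\le_r$, the reflexive-transitive closure of $(A_1;\dots;A_k)\le_r(A_1;\dots;A_i\cup A_{i+1};\dots;A_k)$. In particular it has a greatest element, the one-block partition $(\{1,\dots,n\})$, its set of minimal elements is naturally in bijection with the symmetric group $\Sigma_n$, and it admits all least upper bounds.
   Context: Cubical sets: presheaves on the category $\square$ with objects $[1]^n$ and morphisms generated by faces $\partial_{i,\epsilon}$ (insert $\epsilon$ at coordinate $i$), degeneracies (delete a coordinate) and negative connections ($\gamma_{i,0}$ replaces $(x_i,x_{i+1})$ by $\max(x_i,x_{i+1})$); $\square^n$ is representable, with vertices the subsets of $\{1,\dots,n\}$, $\alpha=\emptyset$, $\omega=\{1,\dots,n\}$. Necklaces: for cubical sets with two chosen vertices $X_{a,b},Y_{u,v}$, $X\vee Y$ is the pushout identifying $b$ with $u$, pointed by $(a,v)$. A necklace is $\square^{n_1}\vee\dots\vee\square^{n_k}$ ($n_i\ge1$) pointed by the $\alpha$ of the first and the $\omega$ of the last cube. $\mathcal{N}ec$ is the full subcategory of double-pointed cubical sets (morphisms preserving both points) on necklaces. $\mathrm{SubNeck}(\square^n)$ denotes the category whose objects are monomorphisms $T\to\square^n$ with $T$ a necklace sending its endpoints to $\alpha,\omega$, and whose morphisms from $f:T\to\square^n$ to $f':T'\to\square^n$ are monomorphisms $g:T\to T'$ in $\mathcal{N}ec$ with $f'g=f$. An ordered partition of $\{1,\dots,n\}$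 is a sequence $(A_1;\dots;A_k)$ of nonempty pairwise disjoint subsets with union $\{1,\dots,n\}$. *)

theory Defs
  imports Main "HOL-Combinatorics.Permutations"
begin

text \<open>A vertex of [1]^n is a bool list of length n (False = 0, True = 1).
  A morphism [1]^m -> [1]^n of the cube category is represented by an
  extensional function on bool lists: it returns [] on lists of length
  different from m.\<close>

type_synonym cmap = "bool list \<Rightarrow> bool list"

definition cid :: "nat \<Rightarrow> cmap" where
  "cid n = (\<lambda>xs. if length xs = n then xs else [])"

definition ccomp :: "nat \<Rightarrow> cmap \<Rightarrow> cmap \<Rightarrow> cmap" where
  "ccomp l g f = (\<lambda>xs. if length xs = l then g (f xs) else [])"

definition cface :: "nat \<Rightarrow> nat \<Rightarrow> bool \<Rightarrow> cmap" where
  "cface n i e = (\<lambda>xs. if length xs = n then take i xs @ [e] @ drop i xs else [])"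

definition cdegen :: "nat \<Rightarrow> nat \<Rightarrow> cmap" where
  "cdegen n i = (\<lambda>xs. if length xs = Suc n then take i xs @ drop (Suc i) xs else [])"

text \<open>negative connection: [1]^(n+2) -> [1]^(n+1), replace (x_i, x_(i+1)) by
  max(x_i, x_(i+1)) (0-based i \<le> n)\<close>
definition cconn :: "nat \<Rightarrow> nat \<Rightarrow> cmap" where
  "cconn n i = (\<lambda>xs. if length xs = Suc (Suc n)
      then take i xs @ [xs ! i \<or> xs ! Suc i] @ drop (Suc (Suc i)) xs else [])"

inductive cube_hom :: "nat \<Rightarrow> nat \<Rightarrow> cmap \<Rightarrow> bool" where
  hid: "cube_hom n n (cid n)"
| hface: "i \<le> n \<Longrightarrow> cube_hom n (Suc n) (cface n i e)"
| hdegen: "i \<le> n \<Longrightarrow> cube_hom (Suc n) n (cdegen n i)"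
| hconn: "i \<le> n \<Longrightarrow> cube_hom (Suc (Suc n)) (Suc n) (cconn n i)"
| hcomp: "cube_hom l m f \<Longrightarrow> cube_hom m n g \<Longrightarrow> cube_hom l n (ccomp l g f)"

definition const_map :: "nat \<Rightarrow> bool list \<Rightarrow> cmap" where
  "const_map m v = (\<lambda>xs. if length xs = m then v else [])"

text \<open>cells X m = set of m-cubes; act X m n f x = X(f)(x) for f : [1]^m -> [1]^n
  and x an n-cube.\<close>
record 'a cset =
  cells :: "nat \<Rightarrow> 'a set"
  act :: "nat \<Rightarrow> nat \<Rightarrow> cmap \<Rightarrow> 'a \<Rightarrow> 'a"

definition cset_hom :: "'a cset \<Rightarrow> 'b cset \<Rightarrow> (nat \<Rightarrow> 'a \<Rightarrow> 'b) \<Rightarrow> bool" where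
  "cset_hom X Y \<phi> \<longleftrightarrow>
     (\<forall>m x. x \<in> cells X m \<longrightarrow> \<phi> m x \<in> cells Y m)
   \<and> (\<forall>m n f x. cube_hom m n f \<and> x \<in> cells X n \<longrightarrow>
          \<phi> m (act X m n f x) = act Y m n f (\<phi> n x))
   \<and> (\<forall>m x. x \<notin> cells X m \<longrightarrow> \<phi> m x = undefined)"

definition cset_mono :: "'a cset \<Rightarrow> (nat \<Rightarrow> 'a \<Rightarrow> 'b) \<Rightarrow> bool" where
  "cset_mono X \<phi> \<longleftrightarrow> (\<forall>m. inj_on (\<phi> m) (cells X m))"

text \<open>The representable cubical set \<box>^n (Yoneda).\<close>
definition cube :: "nat \<Rightarrow> cmap cset" where
  "cube n = \<lparr> cells = (\<lambda>m. {f. cube_hom m n f}),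
              act = (\<lambda>m k h f. ccomp m f h) \<rparr>"

definition alpha :: "nat \<Rightarrow> cmap" where
  "alpha n = const_map 0 (replicate n False)"

definition omega :: "nat \<Rightarrow> cmap" where
  "omega n = const_map 0 (replicate n True)"

text \<open>The necklace \<box>^(ns!0) \<or> ... \<or> \<box>^(ns!(k-1)), built as the iterated pushout
  identifying the omega-vertex of bead i with the alpha-vertex of bead i+1.
  An m-cube is a pair (i, g) with g an m-cube of \<box>^(ns!i); the degenerate
  cubes at the alpha-vertex of bead i > 0 are represented by the corresponding
  cubes at the omega-vertex of bead i-1 (canonical representatives of the
  pushout).\<close>

definition is_neck :: "nat list \<Rightarrow> bool" where
  "is_neck ns \<longleftrightarrow> ns \<noteq> [] \<and> (\<forall>d\<in>set ns. 1 \<le> d)"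

definition nnorm :: "nat list \<Rightarrow> nat \<Rightarrow> nat \<times> cmap \<Rightarrow> nat \<times> cmap" where
  "nnorm ns m p = (case p of (i, g) \<Rightarrow>
     if 0 < i \<and> g = const_map m (replicate (ns ! i) False)
     then (i - 1, const_map m (replicate (ns ! (i - 1)) True)) else (i, g))"

definition necklace :: "nat list \<Rightarrow> (nat \<times> cmap) cset" where
  "necklace ns = \<lparr> cells = (\<lambda>m. {(i, g). i < length ns \<and> cube_hom m (ns ! i) g
                       \<and> \<not> (0 < i \<and> g = const_map m (replicate (ns ! i) False))}),
                   act = (\<lambda>m n h p. nnorm ns m (fst p, ccomp m (snd p) h)) \<rparr>"

definition nstart :: "nat list \<Rightarrow> nat \<times> cmap" where
  "nstart ns = (0, const_map 0 (replicate (ns ! 0) False))"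

definition nend :: "nat list \<Rightarrow> nat \<times> cmap" where
  "nend ns = (length ns - 1, const_map 0 (replicate (last ns) True))"

type_synonym subneck = "nat list \<times> (nat \<Rightarrow> nat \<times> cmap \<Rightarrow> cmap)"

definition subneck_obj :: "nat \<Rightarrow> subneck set" where
  "subneck_obj n = {(ns, \<phi>). is_neck ns \<and> cset_hom (necklace ns) (cube n) \<phi>
       \<and> cset_mono (necklace ns) \<phi>
       \<and> \<phi> 0 (nstart ns) = alpha n \<and> \<phi> 0 (nend ns) = omega n}"

definition subneck_hom :: "nat \<Rightarrow> subneck \<Rightarrow> subneck \<Rightarrow> (nat \<Rightarrow> nat \<times> cmap \<Rightarrow> nat \<times> cmap) \<Rightarrow> bool" where
  "subneck_hom n x y g \<longleftrightarrow> (case x of (ns, \<phi>) \<Rightarrow> case y of (ns', \<phi>') \<Rightarrow>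
       cset_hom (necklace ns) (necklace ns') g \<and> cset_mono (necklace ns) g
     \<and> g 0 (nstart ns) = nstart ns' \<and> g 0 (nend ns) = nend ns'
     \<and> (\<forall>m z. z \<in> cells (necklace ns) m \<longrightarrow> \<phi>' m (g m z) = \<phi> m z))"

definition subneck_le :: "nat \<Rightarrow> subneck \<Rightarrow> subneck \<Rightarrow> bool" where
  "subneck_le n x y \<longleftrightarrow> (\<exists>g. subneck_hom n x y g)"

definition ordered_partitions :: "nat \<Rightarrow> nat set list set" where
  "ordered_partitions n = {P. (\<forall>A\<in>set P. A \<noteq> {})
      \<and> (\<forall>i<length P. \<forall>j<length P. i \<noteq> j \<longrightarrow> P ! i \<inter> P ! j = {})
      \<and> \<Union>(set P) = {1..n}}"

definition merge_step :: "nat set list \<Rightarrow> nat set list \<Rightarrow> bool" where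
  "merge_step P Q \<longleftrightarrow> (\<exists>i. Suc i < length P \<and>
      Q = take i P @ [P ! i \<union> P ! Suc i] @ drop (Suc (Suc i)) P)"

definition refine_le :: "nat set list \<Rightarrow> nat set list \<Rightarrow> bool" where
  "refine_le = merge_step\<^sup>*\<^sup>*"

end

theory Submission
  imports Defs
begin
lemma cube_hom_len:
  assumes "cube_hom m n f"
  shows "(\<forall>xs. length xs = m \<longrightarrow> length (f xs) = n) \<and> (\<forall>xs. length xs \<noteq> m \<longrightarrow> f xs = [])"
  using assms
  by induction (auto simp: cid_def cface_def cdegen_def cconn_def ccomp_def)

lemma ch_len: "cube_hom m n f \<Longrightarrow> length xs = m \<Longrightarrow> length (f xs) = n"
  using cube_hom_len by blast
lemma ch_out: "cube_hom m n f \<Longrightarrow> length xs \<noteq> m \<Longrightarrow> f xs = []"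
  using cube_hom_len by blast

definition extF :: "nat \<Rightarrow> cmap \<Rightarrow> cmap" where
  "extF m f = (\<lambda>xs. if length xs = Suc m then hd xs # f (tl xs) else [])"

lemma cube_hom_extF: "cube_hom m n f \<Longrightarrow> cube_hom (Suc m) (Suc n) (extF m f)"
proof (induction rule: cube_hom.induct)
  case (hid n)
  have "extF n (cid n) = cid (Suc n)"
    by (rule ext, case_tac x) (auto simp: extF_def cid_def)
  then show ?case using cube_hom.hid by metis
next
  case (hface i n e)
  have "extF n (cface n i e) = cface (Suc n) (Suc i) e"
    by (rule ext, case_tac x) (auto simp: extF_def cface_def)
  then show ?case using cube_hom.hface[of "Suc i" "Suc n" e] hface by simp
next
  case (hdegen i n)
  have "extF (Suc n) (cdegen n i) = cdegen (Suc n) (Suc i)"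
    by (rule ext, case_tac x) (auto simp: extF_def cdegen_def)
  then show ?case using cube_hom.hdegen[of "Suc i" "Suc n"] hdegen by simp
next
  case (hconn i n)
  have "extF (Suc (Suc n)) (cconn n i) = cconn (Suc n) (Suc i)"
    by (rule ext, case_tac x) (auto simp: extF_def cconn_def)
  then show ?case using cube_hom.hconn[of "Suc i" "Suc n"] hconn by simp
next
  case (hcomp l m f n g)
  have "extF l (ccomp l g f) = ccomp (Suc l) (extF m g) (extF l f)"
    using ch_len[OF hcomp.hyps(1)]
    by (intro ext, case_tac x) (auto simp: extF_def ccomp_def)
  then show ?case using cube_hom.hcomp[OF hcomp.IH] by simp
qed

fun fm :: "bool list \<Rightarrow> bool list \<Rightarrow> bool list \<Rightarrow> bool list" where
  "fm [] u xs = []"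
| "fm (b # M) u xs = (if b then hd xs # fm M (tl u) (tl xs) else hd u # fm M (tl u) xs)"

fun rm :: "bool list \<Rightarrow> bool list \<Rightarrow> bool list" where
  "rm [] w = []"
| "rm (b # M) w = (if b then hd w # rm M (tl w) else rm M (tl w))"

definition cnt :: "bool list \<Rightarrow> nat" where "cnt M = length (filter id M)"

definition Fc :: "bool list \<Rightarrow> bool list \<Rightarrow> cmap" where
  "Fc M u = (\<lambda>xs. if length xs = cnt M then fm M u xs else [])"

definition Rc :: "bool list \<Rightarrow> cmap" where
  "Rc M = (\<lambda>w. if length w = length M then rm M w else [])"

lemma fm_len[simp]: "length (fm M u xs) = length M"
  by (induction M arbitrary: u xs) auto

lemma rm_len: "length (rm M w) = cnt M"
  by (induction M arbitrary: w) (auto simp: cnt_def)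

lemma cube_hom_Fc: "length u = length M \<Longrightarrow> cube_hom (cnt M) (length M) (Fc M u)"
proof (induction M arbitrary: u)
  case Nil
  have "Fc [] u = cid 0" by (auto simp: Fc_def cid_def cnt_def fun_eq_iff)
  then show ?case using cube_hom.hid[of 0] by (simp add: cnt_def)
next
  case (Cons b M)
  have IH: "cube_hom (cnt M) (length M) (Fc M (tl u))" using Cons by simp
  show ?case
  proof (cases b)
    case True
    have "Fc (b # M) u = extF (cnt M) (Fc M (tl u))"
      using True by (auto simp: Fc_def extF_def cnt_def fun_eq_iff)
    then show ?thesis using cube_hom_extF[OF IH] True by (simp add: cnt_def)
  next
    case False
    have "Fc (b # M) u = ccomp (cnt M) (cface (length M) 0 (hd u)) (Fc M (tl u))"
      using False by (auto simp: Fc_def ccomp_def cface_def cnt_def fun_eq_iff)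
    then show ?thesis using cube_hom.hcomp[OF IH cube_hom.hface[of 0 "length M" "hd u"]] False
      by (simp add: cnt_def)
  qed
qed

lemma cube_hom_Rc: "cube_hom (length M) (cnt M) (Rc M)"
proof (induction M)
  case Nil
  have "Rc [] = cid 0" by (auto simp: Rc_def cid_def fun_eq_iff)
  then show ?case using cube_hom.hid[of 0] by (simp add: cnt_def)
next
  case (Cons b M)
  show ?case
  proof (cases b)
    case True
    have "Rc (b # M) = extF (length M) (Rc M)"
      using True by (auto simp: Rc_def extF_def fun_eq_iff)
    then show ?thesis using cube_hom_extF[OF Cons] True by (simp add: cnt_def)
  next
    case False
    have "Rc (b # M) = ccomp (Suc (length M)) (Rc M) (cdegen (length M) 0)"
      using False by (auto simp: Rc_def ccomp_def cdegen_def fun_eq_iff drop_Suc)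
    then show ?thesis using cube_hom.hcomp[OF cube_hom.hdegen[of 0 "length M"] Cons] False
      by (simp add: cnt_def)
  qed
qed

lemma rm_fm: "length xs = cnt M \<Longrightarrow> rm M (fm M u xs) = xs"
  by (induction M arbitrary: u xs) (auto simp: cnt_def neq_Nil_conv length_Suc_conv)

lemma fm_nth: "j < length M \<Longrightarrow> length u = length M \<Longrightarrow> length xs = cnt M \<Longrightarrow>
   fm M u xs ! j = (if M ! j then xs ! cnt (take j M) else u ! j)"
proof (induction M arbitrary: u xs j)
  case Nil then show ?case by simp
next
  case (Cons b M)
  obtain c u' where u: "u = c # u'" using Cons.prems(2) by (cases u) auto
  show ?case
  proof (cases b)
    case True
    then obtain a xs' where xs: "xs = a # xs'" using Cons.prems(3) by (cases xs) (auto simp: cnt_def)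
    show ?thesis
    proof (cases j)
      case 0 then show ?thesis using True xs u by (simp add: cnt_def)
    next
      case (Suc j')
      then show ?thesis using Cons.IH[of j' u' xs'] Cons.prems True xs u by (simp add: cnt_def)
    qed
  next
    case False
    show ?thesis
    proof (cases j)
      case 0 then show ?thesis using False u by (simp add: cnt_def)
    next
      case (Suc j')
      then show ?thesis using Cons.IH[of j' u' xs] Cons.prems False u by (simp add: cnt_def)
    qed
  qed
qed

lemma fm_rm: "length w = length M \<Longrightarrow> length u = length M \<Longrightarrow>
   (\<forall>j<length M. \<not> M ! j \<longrightarrow> w ! j = u ! j) \<Longrightarrow> fm M u (rm M w) = w"
proof (induction M arbitrary: u w)
  case Nil then show ?case by simp
next
  case (Cons b M)
  obtain a w' where w: "w = a # w'" using Cons.prems(1) by (cases w) auto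
  obtain c u' where u: "u = c # u'" using Cons.prems(2) by (cases u) auto
  have h: "\<forall>j<length M. \<not> M ! j \<longrightarrow> w' ! j = u' ! j"
    using Cons.prems(3) w u by fastforce
  have IH: "fm M u' (rm M w') = w'"
    using Cons.IH[of w' u'] Cons.prems w u h by simp
  have "\<not> b \<Longrightarrow> a = c" using Cons.prems(3) w u by force
  then show ?case using IH w u by (cases b) simp_all
qed

definition INV :: "nat \<Rightarrow> nat \<Rightarrow> cmap \<Rightarrow> bool" where
 "INV k n f \<longleftrightarrow> (\<exists>c d. length c = n
    \<and> (\<forall>xs::bool list. length xs = k \<longrightarrow> f xs = map (\<lambda>j. c!j \<or> (\<exists>r<k. xs!r \<and> d r = Some j)) [0..<n])
    \<and> (\<forall>r s j j'. r < s \<and> s < k \<and> d r = Some j \<and> d s = Some j' \<longrightarrow> j \<le> j'))"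

lemma INV_intro:
  assumes "length c = n"
    and "\<And>xs::bool list. length xs = k \<Longrightarrow> length (f xs) = n"
    and "\<And>(xs::bool list) j. length xs = k \<Longrightarrow> j < n \<Longrightarrow> f xs ! j = (c!j \<or> (\<exists>r<k. xs!r \<and> d r = Some j))"
    and "\<And>r s j j'. r < s \<Longrightarrow> s < k \<Longrightarrow> d r = Some j \<Longrightarrow> d s = Some j' \<Longrightarrow> j \<le> j'"
  shows "INV k n f"
  unfolding INV_def
proof (intro exI conjI allI impI)
  show "length c = n" by fact
  fix xs :: "bool list" assume "length xs = k"
  then show "f xs = map (\<lambda>j. c!j \<or> (\<exists>r<k. xs!r \<and> d r = Some j)) [0..<n]"
    using assms(2,3) by (intro nth_equalityI) auto
qed (use assms(4) in blast)

lemma nth_FalseCons[simp]: "j < Suc n \<Longrightarrow> (False # replicate n False) ! j = False"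
  by (cases j) auto

lemma INV_cid: "INV n n (cid n)"
  by (rule INV_intro[where c="replicate n False" and d=Some]) (auto simp: cid_def)

lemma nth_face: "length xs = n \<Longrightarrow> i \<le> n \<Longrightarrow> j < Suc n \<Longrightarrow>
  (take i xs @ [e] @ drop i xs) ! j = (if j < i then xs!j else if j = i then e else xs!(j - 1))"
  by (auto simp: nth_append min_def)

lemma nth_degen: "length xs = Suc n \<Longrightarrow> i \<le> n \<Longrightarrow> j < n \<Longrightarrow>
  (take i xs @ drop (Suc i) xs) ! j = (if j < i then xs!j else xs!(Suc j))"
  by (auto simp: nth_append min_def)

lemma nth_conn: "length xs = Suc (Suc n) \<Longrightarrow> i \<le> n \<Longrightarrow> j < Suc n \<Longrightarrow>
  (take i xs @ [xs ! i \<or> xs ! Suc i] @ drop (Suc (Suc i)) xs) ! j =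
     (if j < i then xs!j else if j = i then (xs ! i \<or> xs ! Suc i) else xs!(Suc j))"
  by (auto simp: nth_append min_def)

lemma INV_face: assumes "i \<le> n" shows "INV n (Suc n) (cface n i e)"
proof (rule INV_intro[where c="map (\<lambda>j. j = i \<and> e) [0..<Suc n]"
      and d="\<lambda>r. Some (if r < i then r else Suc r)"])
  fix xs :: "bool list" and j assume xs: "length xs = n" and j: "j < Suc n"
  have "cface n i e xs ! j = (if j < i then xs!j else if j = i then e else xs!(j - 1))"
    using nth_face[OF xs assms j] xs by (simp add: cface_def)
  also have "\<dots> = ((map (\<lambda>j. j = i \<and> e) [0..<Suc n]) ! j \<or>
      (\<exists>r<n. xs ! r \<and> Some (if r < i then r else Suc r) = Some j))"
  proof (cases "j < i")
    case True then show ?thesis using assms xs j by (auto simp del: upt_Suc)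
  next
    case False
    show ?thesis
    proof (cases "j = i")
      case True then show ?thesis using assms xs j by (auto simp del: upt_Suc)
    next
      case False
      then have "j > i" using \<open>\<not> j < i\<close> by simp
      then show ?thesis using assms xs j
        by (auto simp del: upt_Suc intro!: exI[of _ "j - 1"])
    qed
  qed
  finally show "cface n i e xs ! j = ((map (\<lambda>j. j = i \<and> e) [0..<Suc n]) ! j \<or>
      (\<exists>r<n. xs ! r \<and> Some (if r < i then r else Suc r) = Some j))" .
qed (use assms in \<open>auto simp: cface_def\<close>)

lemma INV_degen: assumes "i \<le> n" shows "INV (Suc n) n (cdegen n i)"
proof (rule INV_intro[where c="replicate n False"
      and d="\<lambda>r. if r < i then Some r else if r = i then None else Some (r - 1)"])
  fix xs :: "bool list" and j assume xs: "length xs = Suc n" and j: "j < n"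
  have "cdegen n i xs ! j = (if j < i then xs!j else xs!(Suc j))"
    using nth_degen[OF xs assms j] xs by (simp add: cdegen_def)
  also have "\<dots> = ((replicate n False) ! j \<or>
      (\<exists>r<Suc n. xs ! r \<and> (if r < i then Some r else if r = i then None else Some (r - 1)) = Some j))"
  proof (cases "j < i")
    case True then show ?thesis using assms xs j by auto
  next
    case False
    then show ?thesis using assms xs j
      by (auto intro!: exI[of _ "Suc j"])
  qed
  finally show "cdegen n i xs ! j = ((replicate n False) ! j \<or>
      (\<exists>r<Suc n. xs ! r \<and> (if r < i then Some r else if r = i then None else Some (r - 1)) = Some j))" .
qed (use assms in \<open>auto simp: cdegen_def split: if_splits\<close>)

lemma INV_conn: assumes "i \<le> n" shows "INV (Suc (Suc n)) (Suc n) (cconn n i)"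
proof (rule INV_intro[where c="replicate (Suc n) False"
      and d="\<lambda>r. Some (if r \<le> i then r else r - 1)"])
  fix xs :: "bool list" and j assume xs: "length xs = Suc (Suc n)" and j: "j < Suc n"
  have "cconn n i xs ! j = (if j < i then xs!j else if j = i then (xs ! i \<or> xs ! Suc i) else xs!(Suc j))"
    using nth_conn[OF xs assms j] xs by (simp add: cconn_def)
  also have "\<dots> = ((replicate (Suc n) False) ! j \<or>
      (\<exists>r<Suc (Suc n). xs ! r \<and> Some (if r \<le> i then r else r - 1) = Some j))"
  proof (cases "j < i")
    case True then show ?thesis using assms xs j by auto
  next
    case False
    show ?thesis
    proof (cases "j = i")
      case True
      have "(\<exists>r<Suc (Suc n). xs ! r \<and> Some (if r \<le> i then r else r - 1) = Some j) \<longleftrightarrow> xs ! i \<or> xs ! Suc i"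
      proof
        assume "\<exists>r<Suc (Suc n). xs ! r \<and> Some (if r \<le> i then r else r - 1) = Some j"
        then obtain r where "r < Suc (Suc n)" "xs ! r" "(if r \<le> i then r else r - 1) = j" by auto
        then have "r = i \<or> r = Suc i" using True by (auto split: if_splits)
        then show "xs ! i \<or> xs ! Suc i" using \<open>xs ! r\<close> by auto
      next
        assume "xs ! i \<or> xs ! Suc i"
        then show "\<exists>r<Suc (Suc n). xs ! r \<and> Some (if r \<le> i then r else r - 1) = Some j"
          using True assms by (auto intro: exI[of _ i] exI[of _ "Suc i"])
      qed
      then show ?thesis using True assms by simp
    next
      case False
      then have "j > i" using \<open>\<not> j < i\<close> by simp
      have "(\<exists>r<Suc (Suc n). xs ! r \<and> Some (if r \<le> i then r else r - 1) = Some j) \<longleftrightarrow> xs ! Suc j"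
      proof
        assume "\<exists>r<Suc (Suc n). xs ! r \<and> Some (if r \<le> i then r else r - 1) = Some j"
        then obtain r where "r < Suc (Suc n)" "xs ! r" "(if r \<le> i then r else r - 1) = j" by auto
        then have "r = Suc j" using \<open>j > i\<close> by (auto split: if_splits)
        then show "xs ! Suc j" using \<open>xs ! r\<close> by auto
      next
        assume "xs ! Suc j"
        then show "\<exists>r<Suc (Suc n). xs ! r \<and> Some (if r \<le> i then r else r - 1) = Some j"
          using \<open>j > i\<close> j by (auto intro!: exI[of _ "Suc j"])
      qed
      then show ?thesis using \<open>j > i\<close> j by simp
    qed
  qed
  finally show "cconn n i xs ! j = ((replicate (Suc n) False) ! j \<or>
      (\<exists>r<Suc (Suc n). xs ! r \<and> Some (if r \<le> i then r else r - 1) = Some j))" .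
qed (use assms in \<open>auto simp: cconn_def split: if_splits\<close>)

lemma INV_comp:
  assumes f: "INV l m f" and g: "INV m n g" and fl: "\<And>xs::bool list. length xs = l \<Longrightarrow> length (f xs) = m"
  shows "INV l n (ccomp l g f)"
proof -
  obtain c1 d1 where c1: "length c1 = m"
    and f1: "\<And>xs::bool list. length xs = l \<Longrightarrow> f xs = map (\<lambda>j. c1!j \<or> (\<exists>r<l. xs!r \<and> d1 r = Some j)) [0..<m]"
    and o1: "\<And>r s j j'. r < s \<Longrightarrow> s < l \<Longrightarrow> d1 r = Some j \<Longrightarrow> d1 s = Some j' \<Longrightarrow> j \<le> j'"
    using f unfolding INV_def by blast
  obtain c2 d2 where c2: "length c2 = n"
    and g2: "\<And>xs::bool list. length xs = m \<Longrightarrow> g xs = map (\<lambda>j. c2!j \<or> (\<exists>r<m. xs!r \<and> d2 r = Some j)) [0..<n]"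
    and o2: "\<And>r s j j'. r < s \<Longrightarrow> s < m \<Longrightarrow> d2 r = Some j \<Longrightarrow> d2 s = Some j' \<Longrightarrow> j \<le> j'"
    using g unfolding INV_def by blast
  define c where "c = map (\<lambda>j. c2!j \<or> (\<exists>r<m. c1!r \<and> d2 r = Some j)) [0..<n]"
  define d where "d = (\<lambda>q. case d1 q of None \<Rightarrow> None | Some r \<Rightarrow> if r < m then d2 r else None)"
  show ?thesis
  proof (rule INV_intro[where c=c and d=d])
    show "length c = n" by (simp add: c_def)
  next
    fix xs :: "bool list" assume "length xs = l" then show "length (ccomp l g f xs) = n"
      using fl g2 by (simp add: ccomp_def)
  next
    fix xs :: "bool list" and j assume xs: "length xs = l" and j: "j < n"
    have fx: "length (f xs) = m" using fl xs by simp
    have "ccomp l g f xs ! j = (c2!j \<or> (\<exists>r<m. f xs!r \<and> d2 r = Some j))"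
      using xs j fx g2 by (simp add: ccomp_def)
    also have "\<dots> = (c2!j \<or> (\<exists>r<m. (c1!r \<or> (\<exists>q<l. xs!q \<and> d1 q = Some r)) \<and> d2 r = Some j))"
    proof -
      have e: "\<And>r. r < m \<Longrightarrow> f xs ! r = (c1!r \<or> (\<exists>q<l. xs!q \<and> d1 q = Some r))"
        using f1[OF xs] by simp
      show ?thesis by (simp add: e cong: conj_cong)
    qed
    also have "\<dots> = (c!j \<or> (\<exists>q<l. xs!q \<and> d q = Some j))"
      using j by (auto simp: c_def d_def split: option.splits)
    finally show "ccomp l g f xs ! j = (c!j \<or> (\<exists>q<l. xs!q \<and> d q = Some j))" .
  next
    fix r s j j' assume rs: "r < s" "s < l" "d r = Some j" "d s = Some j'"
    then obtain a b where a: "d1 r = Some a" "a < m" "d2 a = Some j" and b: "d1 s = Some b" "b < m" "d2 b = Some j'"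
      by (auto simp: d_def split: option.splits if_splits)
    have "a \<le> b" using o1[OF rs(1,2) a(1) b(1)] .
    then show "j \<le> j'"
    proof (cases "a = b")
      case True then show ?thesis using a b by simp
    next
      case False then show ?thesis using o2[of a b j j'] a b \<open>a \<le> b\<close> by simp
    qed
  qed
qed

lemma cube_hom_INV: "cube_hom m n f \<Longrightarrow> INV m n f"
proof (induction rule: cube_hom.induct)
  case (hid n) then show ?case by (rule INV_cid)
next
  case (hface i n e) then show ?case by (rule INV_face)
next
  case (hdegen i n) then show ?case by (rule INV_degen)
next
  case (hconn i n) then show ?case by (rule INV_conn)
next
  case (hcomp l m f n g) then show ?case using INV_comp ch_len by blast
qed

definition ev :: "nat \<Rightarrow> nat \<Rightarrow> bool list" where
  "ev k r = (replicate k False)[r := True]"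

lemma INV_inj_struct:
  assumes I: "INV k n f" and inj: "inj_on f {xs. length xs = k}"
  shows "\<exists>c D. length c = n \<and> (\<forall>xs. length xs = k \<longrightarrow> f xs = map (\<lambda>j. c!j \<or> (\<exists>r<k. xs!r \<and> D r = j)) [0..<n])
     \<and> (\<forall>r s. r < s \<and> s < k \<longrightarrow> D r < D s) \<and> (\<forall>r<k. D r < n \<and> \<not> c ! (D r))"
proof -
  obtain c d where c: "length c = n"
    and f: "\<And>xs::bool list. length xs = k \<Longrightarrow> f xs = map (\<lambda>j. c!j \<or> (\<exists>r<k. xs!r \<and> d r = Some j)) [0..<n]"
    and o: "\<And>r s j j'. r < s \<Longrightarrow> s < k \<Longrightarrow> d r = Some j \<Longrightarrow> d s = Some j' \<Longrightarrow> j \<le> j'"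
    using I unfolding INV_def by blast
  have fa: "f (replicate k False) = c"
  proof -
    have "f (replicate k False) = map (\<lambda>j. c!j) [0..<n]"
      using f[of "replicate k False"] by (simp cong: conj_cong)
    then show ?thesis using c map_nth[of c] by simp
  qed
  have evn: "ev k r ! r' = (r' = r)" if "r < k" "r' < k" for r r'
    using that by (simp add: ev_def nth_list_update)
  have evl: "length (ev k r) = k" for r by (simp add: ev_def)
  have fe: "f (ev k r) = map (\<lambda>j. c!j \<or> d r = Some j) [0..<n]" if "r < k" for r
  proof -
    have "\<And>j. (\<exists>r'<k. ev k r ! r' \<and> d r' = Some j) = (d r = Some j)"
      using that evn[OF that] by blast
    then show ?thesis using f[OF evl[of r]] by simp
  qed
  have dr: "\<exists>j<n. d r = Some j \<and> \<not> c ! j" if "r < k" for r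
  proof (rule ccontr)
    assume na: "\<not> ?thesis"
    have "map (\<lambda>j. c!j \<or> d r = Some j) [0..<n] = c"
    proof (rule nth_equalityI)
      show "length (map (\<lambda>j. c!j \<or> d r = Some j) [0..<n]) = length c" using c by simp
      fix j assume "j < length (map (\<lambda>j. c!j \<or> d r = Some j) [0..<n])"
      then have j: "j < n" by simp
      show "map (\<lambda>j. c!j \<or> d r = Some j) [0..<n] ! j = c ! j"
        using na j by auto
    qed
    then have "f (ev k r) = f (replicate k False)"
      using fe[OF that] fa by simp
    moreover have "ev k r \<noteq> replicate k False"
      using evn[OF that that] that by (metis nth_replicate)
    ultimately show False using inj that evl[of r] by (auto simp: inj_on_def)
  qed
  define D where "D r = the (d r)" for r
  have Dr: "d r = Some (D r) \<and> D r < n \<and> \<not> c ! (D r)" if "r < k" for r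
    using dr[OF that] by (auto simp: D_def)
  have mono: "D r < D s" if "r < s" "s < k" for r s
  proof -
    have le: "D r \<le> D s" using o[OF that] Dr[of r] Dr[of s] that by simp
    have "D r \<noteq> D s"
    proof
      assume eq: "D r = D s"
      have "d r = d s" using eq Dr[of r] Dr[of s] that by simp
      then have "f (ev k r) = f (ev k s)" using fe[of r] fe[of s] that by simp
      moreover have "ev k r \<noteq> ev k s"
        using that evn[of r r] evn[of s r] by force
      ultimately show False using inj that evl by (auto simp: inj_on_def)
    qed
    then show ?thesis using le by simp
  qed
  have "\<forall>xs. length xs = k \<longrightarrow> f xs = map (\<lambda>j. c!j \<or> (\<exists>r<k. xs!r \<and> D r = j)) [0..<n]"
  proof (intro allI impI)
    fix xs :: "bool list" assume xs: "length xs = k"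
    have "\<And>j. (\<exists>r<k. xs!r \<and> d r = Some j) = (\<exists>r<k. xs!r \<and> D r = j)" using Dr by auto
    then show "f xs = map (\<lambda>j. c!j \<or> (\<exists>r<k. xs!r \<and> D r = j)) [0..<n]" using f[OF xs] by simp
  qed
  then show ?thesis using c mono Dr by blast
qed

lemma strict_same_image:
  assumes "\<forall>r s. r < s \<and> s < k \<longrightarrow> (D::nat\<Rightarrow>nat) r < D s" "\<forall>r s. r < s \<and> s < k \<longrightarrow> (D'::nat\<Rightarrow>nat) r < D' s"
    and "D ` {..<k} = D' ` {..<k}" and "r < k"
  shows "D r = D' r"
proof -
  have s1: "sorted_wrt (<) (map D [0..<k])" using assms(1) by (simp add: sorted_wrt_iff_nth_less)
  have s2: "sorted_wrt (<) (map D' [0..<k])" using assms(2) by (simp add: sorted_wrt_iff_nth_less)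
  have "set (map D [0..<k]) = set (map D' [0..<k])" using assms(3) by (simp add: atLeast0LessThan)
  then have "map D [0..<k] = map D' [0..<k]"
    using s1 s2 by (metis sorted_distinct_set_unique strict_sorted_iff)
  then show ?thesis using assms(4) by (metis add_0 diff_zero nth_map_upt)
qed

lemma INV_struct_top:
  assumes "\<forall>xs. length xs = k \<longrightarrow> f xs = map (\<lambda>j. c!j \<or> (\<exists>r<k. xs!r \<and> D r = j)) [0..<n]"
   and "length c = n" and "\<forall>r<k. D r < n \<and> \<not> c ! (D r)"
  shows "{j. j < n \<and> f (replicate k True) ! j \<and> \<not> f (replicate k False) ! j} = D ` {..<k}"
proof -
  have t: "f (replicate k True) = map (\<lambda>j. c!j \<or> (\<exists>r<k. D r = j)) [0..<n]"
    using assms(1) by (simp cong: conj_cong)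
  have f: "f (replicate k False) = map (\<lambda>j. c!j) [0..<n]"
    using assms(1) by (simp cong: conj_cong)
  show ?thesis unfolding t f using assms(3) by auto
qed

definition topv :: "nat \<Rightarrow> nat \<Rightarrow> cmap \<Rightarrow> nat set" where
  "topv k n f = {j. j < n \<and> f (replicate k True) ! j \<and> \<not> f (replicate k False) ! j}"

lemma INV_inj_topv:
  assumes I: "INV k n f" and inj: "inj_on f {xs. length xs = k}"
  shows "card (topv k n f) = k"
proof -
  obtain c D where c: "length c = n" and f: "\<forall>xs. length xs = k \<longrightarrow> f xs = map (\<lambda>j. c!j \<or> (\<exists>r<k. xs!r \<and> D r = j)) [0..<n]"
    and m: "\<forall>r s. r < s \<and> s < k \<longrightarrow> D r < D s" and D: "\<forall>r<k. D r < n \<and> \<not> c ! (D r)"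
    using INV_inj_struct[OF I inj] by blast
  have "topv k n f = D ` {..<k}"
    using INV_struct_top[OF f c D] by (simp add: topv_def)
  moreover have "inj_on D {..<k}" using m by (metis inj_on_def lessThan_iff nat_neq_iff)
  ultimately show ?thesis by (simp add: card_image)
qed

lemma INV_inj_unique:
  assumes I: "INV k n f" and inj: "inj_on f {xs. length xs = k}"
    and I': "INV k n f'" and inj': "inj_on f' {xs. length xs = k}"
    and a: "f (replicate k False) = f' (replicate k False)"
    and o: "f (replicate k True) = f' (replicate k True)"
    and xs: "length xs = k"
  shows "f xs = f' xs"
proof -
  obtain c D where c: "length c = n" and f: "\<forall>xs. length xs = k \<longrightarrow> f xs = map (\<lambda>j. c!j \<or> (\<exists>r<k. xs!r \<and> D r = j)) [0..<n]"
    and m: "\<forall>r s. r < s \<and> s < k \<longrightarrow> D r < D s" and D: "\<forall>r<k. D r < n \<and> \<not> c ! (D r)"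
    using INV_inj_struct[OF I inj] by blast
  obtain c' D' where c': "length c' = n" and f': "\<forall>xs. length xs = k \<longrightarrow> f' xs = map (\<lambda>j. c'!j \<or> (\<exists>r<k. xs!r \<and> D' r = j)) [0..<n]"
    and m': "\<forall>r s. r < s \<and> s < k \<longrightarrow> D' r < D' s" and D': "\<forall>r<k. D' r < n \<and> \<not> c' ! (D' r)"
    using INV_inj_struct[OF I' inj'] by blast
  have "f (replicate k False) = map (\<lambda>j. c!j) [0..<n]"
    using f by (simp cong: conj_cong)
  moreover have "f' (replicate k False) = map (\<lambda>j. c'!j) [0..<n]"
    using f' by (simp cong: conj_cong)
  moreover have "map (\<lambda>j. c!j) [0..<n] = c" using c by (metis map_nth)
  moreover have "map (\<lambda>j. c'!j) [0..<n] = c'" using c' by (metis map_nth)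
  ultimately have cc: "c = c'" using a by simp
  have "topv k n f = D ` {..<k}"
    using INV_struct_top[OF f c D] by (simp add: topv_def)
  moreover have "topv k n f' = D' ` {..<k}"
    using INV_struct_top[OF f' c' D'] by (simp add: topv_def)
  moreover have "topv k n f = topv k n f'" using a o by (simp add: topv_def)
  ultimately have "D ` {..<k} = D' ` {..<k}" by simp
  then have "\<forall>r<k. D r = D' r" using strict_same_image[OF m m'] by blast
  then have "\<And>j. (\<exists>r<k. xs!r \<and> D r = j) = (\<exists>r<k. xs!r \<and> D' r = j)" by auto
  then show ?thesis using f f' xs cc by simp
qed

lemma fm_allF: "length u = length M \<Longrightarrow> (\<forall>b\<in>set M. \<not> b) \<Longrightarrow> fm M u xs = u"
  by (induction M arbitrary: u xs) (auto simp: length_Suc_conv)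

lemma cnt_allF: "(\<forall>b\<in>set M. \<not> b) \<Longrightarrow> cnt M = 0"
  by (simp add: cnt_def filter_empty_conv)

lemma const0_hom: "length v = k \<Longrightarrow> cube_hom 0 k (const_map 0 v)"
proof -
  assume v: "length v = k"
  have "Fc (replicate k False) v = const_map 0 v"
    using v by (auto simp: Fc_def const_map_def fun_eq_iff cnt_allF fm_allF)
  then show ?thesis using cube_hom_Fc[of v "replicate k False"] v by (simp add: cnt_allF)
qed

lemma const_hom: "length v = k \<Longrightarrow> cube_hom m k (const_map m v)"
proof -
  assume v: "length v = k"
  have R: "cube_hom m 0 (Rc (replicate m False))"
    using cube_hom_Rc[of "replicate m False"] by (simp add: cnt_allF)
  have "ccomp m (const_map 0 v) (Rc (replicate m False)) = const_map m v"
    using rm_len[of "replicate m False"] by (auto simp: ccomp_def const_map_def Rc_def fun_eq_iff cnt_allF)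
  then show ?thesis using cube_hom.hcomp[OF R const0_hom[OF v]] by simp
qed

lemma const_map_inj: "const_map m v = const_map m w \<Longrightarrow> v = w"
  by (metis const_map_def length_replicate)

lemma rep_neq: "1 \<le> k \<Longrightarrow> replicate k True \<noteq> replicate k False"
  by (cases k) auto

lemma cid_neq_const: "1 \<le> k \<Longrightarrow> cid k \<noteq> const_map k (replicate k False)"
proof
  assume "1 \<le> k" "cid k = const_map k (replicate k False)"
  then have "cid k (replicate k True) = const_map k (replicate k False) (replicate k True)" by simp
  then show False using \<open>1 \<le> k\<close> rep_neq by (simp add: cid_def const_map_def)
qed

lemma ccomp_cid_left: "cube_hom m k g \<Longrightarrow> ccomp m (cid k) g = g"
  using ch_len[of m k g] ch_out[of m k g] by (auto simp: ccomp_def cid_def fun_eq_iff)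

lemma ccomp_cid_right: "cube_hom k n f \<Longrightarrow> ccomp k f (cid k) = f"
  using ch_out[of k n f] by (auto simp: ccomp_def cid_def fun_eq_iff)

lemma ccomp_assoc: "cube_hom m k h \<Longrightarrow> ccomp m (ccomp k f g) h = ccomp m f (ccomp m g h)"
  using ch_len[of m k h] by (auto simp: ccomp_def fun_eq_iff)

lemma ccomp_const: "ccomp m f (const_map m v) = const_map m (f v)"
  by (auto simp: ccomp_def const_map_def fun_eq_iff)

lemma ccomp_into_const: "cube_hom m k g \<Longrightarrow> (\<forall>xs. length xs = m \<longrightarrow> g xs = v) \<Longrightarrow> g = const_map m v"
  using ch_out[of m k g] by (auto simp: const_map_def fun_eq_iff)

lemma neck_cells: "z \<in> cells (necklace ns) m \<longleftrightarrow> (fst z < length ns \<and> cube_hom m (ns ! fst z) (snd z)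
   \<and> \<not> (0 < fst z \<and> snd z = const_map m (replicate (ns ! fst z) False)))"
  by (cases z) (simp add: necklace_def)

lemma neck_act: "act (necklace ns) m k h z = nnorm ns m (fst z, ccomp m (snd z) h)"
  by (simp add: necklace_def)

lemma neck_act_cell:
  assumes ns: "is_neck ns" and z: "z \<in> cells (necklace ns) k" and h: "cube_hom m k h"
  shows "act (necklace ns) m k h z \<in> cells (necklace ns) m"
proof -
  obtain i g where zi: "z = (i, g)" by (cases z)
  have i: "i < length ns" and g: "cube_hom k (ns ! i) g" using z zi by (auto simp: neck_cells)
  show ?thesis
  proof (cases "0 < i \<and> ccomp m g h = const_map m (replicate (ns ! i) False)")
    case True
    have pos: "1 \<le> ns ! (i - 1)" using ns i unfolding is_neck_def by (meson less_imp_diff_less nth_mem)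
    have "const_map m (replicate (ns ! (i - 1)) True) \<noteq> const_map m (replicate (ns ! (i - 1)) False)"
      using const_map_inj rep_neq[OF pos] by blast
    then show ?thesis using True i zi
      by (auto simp: neck_act nnorm_def neck_cells const_hom)
  next
    case False
    then show ?thesis using i g h zi
      by (auto simp: neck_act nnorm_def neck_cells intro: cube_hom.hcomp)
  qed
qed

lemma neck_top_cell:
  assumes ns: "is_neck ns" and i: "i < length ns"
  shows "(i, cid (ns ! i)) \<in> cells (necklace ns) (ns ! i)"
proof -
  have "1 \<le> ns ! i" using ns i unfolding is_neck_def by auto
  then show ?thesis using i cid_neq_const by (auto simp: neck_cells cube_hom.hid)
qed

lemma neck_act_top:
  assumes "(i, g) \<in> cells (necklace ns) m"
  shows "act (necklace ns) m (ns ! i) g (i, cid (ns ! i)) = (i, g)"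
proof -
  have g: "cube_hom m (ns ! i) g" using assms by (simp add: neck_cells)
  then show ?thesis using assms by (auto simp: neck_act nnorm_def ccomp_cid_left neck_cells)
qed

definition vc :: "nat list \<Rightarrow> nat \<Rightarrow> bool list \<Rightarrow> nat \<times> cmap" where
  "vc ns i w = act (necklace ns) 0 (ns ! i) (const_map 0 w) (i, cid (ns ! i))"

lemma vc_cell: "is_neck ns \<Longrightarrow> i < length ns \<Longrightarrow> length w = ns ! i \<Longrightarrow> vc ns i w \<in> cells (necklace ns) 0"
  unfolding vc_def using neck_act_cell neck_top_cell const0_hom by blast

lemma vc_eq: "length w = ns ! i \<Longrightarrow> vc ns i w = nnorm ns 0 (i, const_map 0 w)"
proof -
  assume "length w = ns ! i"
  then have "ccomp 0 (cid (ns ! i)) (const_map 0 w) = const_map 0 w"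
    by (auto simp: ccomp_def cid_def const_map_def fun_eq_iff)
  then show ?thesis by (simp add: vc_def neck_act)
qed

lemma vc_inj:
  assumes "length w = ns ! i" "length w' = ns ! i" "vc ns i w = vc ns i w'"
  shows "w = w'"
proof -
  have "nnorm ns 0 (i, const_map 0 w) = nnorm ns 0 (i, const_map 0 w')" using assms vc_eq by metis
  then show ?thesis
    by (auto simp: nnorm_def split: if_splits dest: const_map_inj)
qed

lemma nstart_vc: "nstart ns = vc ns 0 (replicate (ns ! 0) False)"
  by (simp add: vc_eq nstart_def nnorm_def)

lemma nend_vc: assumes "is_neck ns" shows "nend ns = vc ns (length ns - 1) (replicate (ns ! (length ns - 1)) True)"
proof -
  have ne: "ns \<noteq> []" and pos: "1 \<le> ns ! (length ns - 1)" using assms unfolding is_neck_def by auto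
  have "const_map 0 (replicate (ns ! (length ns - 1)) True) \<noteq> const_map 0 (replicate (ns ! (length ns - 1)) False)"
    using const_map_inj rep_neq[OF pos] by blast
  then show ?thesis using ne by (simp add: vc_eq nend_def nnorm_def last_conv_nth)
qed

lemma vc_alpha: assumes ns: "is_neck ns" and "0 < i" "i < length ns"
  shows "vc ns i (replicate (ns ! i) False) = vc ns (i - 1) (replicate (ns ! (i - 1)) True)"
proof -
  have pos: "1 \<le> ns ! (i - 1)" using ns assms(3) unfolding is_neck_def by (meson less_imp_diff_less nth_mem)
  have "const_map 0 (replicate (ns ! (i - 1)) True) \<noteq> const_map 0 (replicate (ns ! (i - 1)) False)"
    using const_map_inj rep_neq[OF pos] by blast
  then show ?thesis using assms
    by (simp add: vc_eq nnorm_def)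
qed

definition fi :: "(nat \<Rightarrow> nat \<times> cmap \<Rightarrow> cmap) \<Rightarrow> nat list \<Rightarrow> nat \<Rightarrow> cmap" where
  "fi \<phi> ns i = \<phi> (ns ! i) (i, cid (ns ! i))"

definition Cs :: "nat set list \<Rightarrow> nat \<Rightarrow> nat set" where
  "Cs P i = \<Union> {P ! l | l. l < i \<and> l < length P}"

definition vl :: "nat \<Rightarrow> nat set \<Rightarrow> bool list" where
  "vl n X = map (\<lambda>j. Suc j \<in> X) [0..<n]"

definition PhiN :: "nat \<Rightarrow> subneck \<Rightarrow> nat set list" where
  "PhiN n x = (case x of (ns, \<phi>) \<Rightarrow> map (\<lambda>i. Suc ` topv (ns ! i) n (fi \<phi> ns i)) [0..<length ns])"

lemma Cs_0[simp]: "Cs P 0 = {}" by (simp add: Cs_def)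

lemma Cs_Suc: "i < length P \<Longrightarrow> Cs P (Suc i) = Cs P i \<union> P ! i"
  unfolding Cs_def by (auto simp: less_Suc_eq)

lemma Cs_len: "Cs P (length P) = \<Union> (set P)"
proof -
  have "{P ! l | l. l < length P \<and> l < length P} = set P" by (auto simp: in_set_conv_nth)
  then show ?thesis by (simp add: Cs_def)
qed

lemma Cs_mono: "i \<le> i' \<Longrightarrow> Cs P i \<subseteq> Cs P i'"
  unfolding Cs_def by (intro Union_mono) auto

lemma Cs_ge: "length P \<le> i \<Longrightarrow> Cs P i = Cs P (length P)"
  unfolding Cs_def by (rule arg_cong[where f=Union]) auto

lemma nth_subset_Cs: "l < i \<Longrightarrow> l < length P \<Longrightarrow> P ! l \<subseteq> Cs P i"
  unfolding Cs_def by auto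

lemma vl_len[simp]: "length (vl n X) = n" by (simp add: vl_def)
lemma vl_nth: "j < n \<Longrightarrow> vl n X ! j = (Suc j \<in> X)" by (simp add: vl_def)

lemma vl_inj: "X \<subseteq> {1..n} \<Longrightarrow> Y \<subseteq> {1..n} \<Longrightarrow> vl n X = vl n Y \<Longrightarrow> X = Y"
proof -
  assume X: "X \<subseteq> {1..n}" and Y: "Y \<subseteq> {1..n}" and e: "vl n X = vl n Y"
  have "\<And>j. j < n \<Longrightarrow> (Suc j \<in> X) = (Suc j \<in> Y)" using e by (metis vl_nth)
  then show "X = Y" using X Y
    by (auto simp: subset_iff) (metis Suc_le_eq Suc_pred le_neq_implies_less not_le less_eq_Suc_le)+
qed

lemma vl_step:
  assumes "length a = n" "length b = n" "\<forall>j<n. a ! j \<longrightarrow> b ! j" "vl n X = a"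
  shows "vl n (X \<union> Suc ` {j. j < n \<and> b ! j \<and> \<not> a ! j}) = b"
proof (rule nth_equalityI)
  show "length (vl n (X \<union> Suc ` {j. j < n \<and> b ! j \<and> \<not> a ! j})) = length b" using assms by simp
  fix j assume "j < length (vl n (X \<union> Suc ` {j. j < n \<and> b ! j \<and> \<not> a ! j}))"
  then have j: "j < n" by simp
  have "Suc j \<in> X \<longleftrightarrow> a ! j" using assms(4) j vl_nth by metis
  then show "vl n (X \<union> Suc ` {j. j < n \<and> b ! j \<and> \<not> a ! j}) ! j = b ! j"
    using j assms(3) by (auto simp: vl_nth)
qed

lemma INV_mono:
  assumes "INV k n f" "j < n" "f (replicate k False) ! j"
  shows "f (replicate k True) ! j"
proof -
  obtain c d where c: "length c = n"
    and f: "\<And>xs::bool list. length xs = k \<Longrightarrow> f xs = map (\<lambda>j. c!j \<or> (\<exists>r<k. xs!r \<and> d r = Some j)) [0..<n]"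
    using assms(1) unfolding INV_def by blast
  have "f (replicate k False) ! j = c ! j" using f[of "replicate k False"] assms(2) by (simp cong: conj_cong)
  moreover have "f (replicate k True) ! j = (c ! j \<or> (\<exists>r<k. d r = Some j))"
    using f[of "replicate k True"] assms(2) by (simp cong: conj_cong)
  ultimately show ?thesis using assms(3) by simp
qed

locale obj =
  fixes n ns \<phi>
  assumes obj: "(ns, \<phi>) \<in> subneck_obj n"
begin

lemma neck: "is_neck ns" using obj by (simp add: subneck_obj_def)
lemma hom: "cset_hom (necklace ns) (cube n) \<phi>" using obj by (simp add: subneck_obj_def)
lemma mono: "cset_mono (necklace ns) \<phi>" using obj by (simp add: subneck_obj_def)
lemma pos: "i < length ns \<Longrightarrow> 1 \<le> ns ! i" using neck unfolding is_neck_def by auto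
lemma ne: "ns \<noteq> []" using neck unfolding is_neck_def by auto

lemma fi_hom: "i < length ns \<Longrightarrow> cube_hom (ns ! i) n (fi \<phi> ns i)"
  using hom neck_top_cell[OF neck] unfolding cset_hom_def fi_def by (auto simp: cube_def)

lemma nat: "cube_hom m k h \<Longrightarrow> z \<in> cells (necklace ns) k \<Longrightarrow>
   \<phi> m (act (necklace ns) m k h z) = ccomp m (\<phi> k z) h"
proof -
  assume a: "cube_hom m k h" "z \<in> cells (necklace ns) k"
  have "\<phi> m (act (necklace ns) m k h z) = act (cube n) m k h (\<phi> k z)"
    using hom a unfolding cset_hom_def by blast
  then show ?thesis by (simp add: cube_def)
qed

lemma phi_cell: assumes "(i, g) \<in> cells (necklace ns) m" shows "\<phi> m (i, g) = ccomp m (fi \<phi> ns i) g"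
proof -
  have i: "i < length ns" and g: "cube_hom m (ns ! i) g" using assms by (auto simp: neck_cells)
  show ?thesis using nat[OF g neck_top_cell[OF neck i]] neck_act_top[OF assms] by (simp add: fi_def)
qed

lemma phi_out: "z \<notin> cells (necklace ns) m \<Longrightarrow> \<phi> m z = undefined"
  using hom unfolding cset_hom_def by blast

lemma phi_vc: assumes "i < length ns" "length w = ns ! i"
  shows "\<phi> 0 (vc ns i w) = const_map 0 (fi \<phi> ns i w)"
  using nat[OF const0_hom[OF assms(2)] neck_top_cell[OF neck assms(1)]]
  by (simp add: vc_def fi_def ccomp_const)

lemma fi_inj: assumes i: "i < length ns" shows "inj_on (fi \<phi> ns i) {xs. length xs = ns ! i}"
proof (rule inj_onI)
  fix w w' assume w: "w \<in> {xs. length xs = ns ! i}" and w': "w' \<in> {xs. length xs = ns ! i}"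
    and e: "fi \<phi> ns i w = fi \<phi> ns i w'"
  have "\<phi> 0 (vc ns i w) = \<phi> 0 (vc ns i w')" using phi_vc[OF i] w w' e by simp
  then have "vc ns i w = vc ns i w'"
    using mono vc_cell[OF neck i] w w' unfolding cset_mono_def inj_on_def by blast
  then show "w = w'" using vc_inj w w' by blast
qed

lemma fi_start: "fi \<phi> ns 0 (replicate (ns ! 0) False) = replicate n False"
proof -
  have "\<phi> 0 (nstart ns) = alpha n" using obj by (simp add: subneck_obj_def)
  then show ?thesis using phi_vc[of 0 "replicate (ns ! 0) False"] ne nstart_vc
    by (auto simp: alpha_def dest: const_map_inj)
qed

lemma fi_end: "fi \<phi> ns (length ns - 1) (replicate (ns ! (length ns - 1)) True) = replicate n True"
proof -
  have "\<phi> 0 (nend ns) = omega n" using obj by (simp add: subneck_obj_def)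
  then show ?thesis using phi_vc[of "length ns - 1" "replicate (ns ! (length ns - 1)) True"] ne nend_vc[OF neck]
    by (auto simp: omega_def dest: const_map_inj)
qed

lemma fi_chain: assumes "0 < i" "i < length ns"
  shows "fi \<phi> ns i (replicate (ns ! i) False) = fi \<phi> ns (i - 1) (replicate (ns ! (i - 1)) True)"
proof -
  have "const_map 0 (fi \<phi> ns i (replicate (ns ! i) False)) = const_map 0 (fi \<phi> ns (i - 1) (replicate (ns ! (i - 1)) True))"
    using phi_vc[of i "replicate (ns ! i) False"] phi_vc[of "i - 1" "replicate (ns ! (i - 1)) True"]
      vc_alpha[OF neck assms] assms by simp
  then show ?thesis by (rule const_map_inj)
qed

abbreviation "P \<equiv> PhiN n (ns, \<phi>)"

lemma P_len: "length P = length ns" by (simp add: PhiN_def)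
lemma P_nth: "i < length ns \<Longrightarrow> P ! i = Suc ` topv (ns ! i) n (fi \<phi> ns i)" by (simp add: PhiN_def)

lemma fi_len: "i < length ns \<Longrightarrow> length xs = ns ! i \<Longrightarrow> length (fi \<phi> ns i xs) = n"
  using ch_len fi_hom by blast

lemma chain: "i < length ns \<Longrightarrow> vl n (Cs P i) = fi \<phi> ns i (replicate (ns ! i) False)
   \<and> vl n (Cs P (Suc i)) = fi \<phi> ns i (replicate (ns ! i) True)"
proof (induction i)
  case 0
  have a: "vl n (Cs P 0) = fi \<phi> ns 0 (replicate (ns ! 0) False)"
    using fi_start by (simp add: vl_def map_replicate_const)
  have "vl n (Cs P 0 \<union> P ! 0) = fi \<phi> ns 0 (replicate (ns ! 0) True)"
    using vl_step[OF fi_len fi_len _ a] 0 P_nth[of 0] INV_mono[OF cube_hom_INV[OF fi_hom[of 0]]]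
    by (simp add: topv_def)
  then show ?case using a Cs_Suc[of 0 P] 0 P_len by simp
next
  case (Suc i)
  then have IH: "vl n (Cs P (Suc i)) = fi \<phi> ns i (replicate (ns ! i) True)" by simp
  have a: "vl n (Cs P (Suc i)) = fi \<phi> ns (Suc i) (replicate (ns ! Suc i) False)"
    using IH fi_chain[of "Suc i"] Suc.prems by simp
  have "vl n (Cs P (Suc i) \<union> P ! Suc i) = fi \<phi> ns (Suc i) (replicate (ns ! Suc i) True)"
    using vl_step[OF fi_len fi_len _ a] Suc.prems P_nth[of "Suc i"] INV_mono[OF cube_hom_INV[OF fi_hom[of "Suc i"]]]
    by (simp add: topv_def)
  then show ?case using a Cs_Suc[of "Suc i" P] Suc.prems P_len by simp
qed

lemma P_card: "i < length ns \<Longrightarrow> card (P ! i) = ns ! i"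
  using P_nth INV_inj_topv[OF cube_hom_INV[OF fi_hom] fi_inj] by (simp add: card_image)

lemma P_sub: "i < length ns \<Longrightarrow> P ! i \<subseteq> {1..n}"
  using P_nth by (auto simp: topv_def)

lemma P_ne: "i < length ns \<Longrightarrow> P ! i \<noteq> {}"
  using P_card pos by fastforce

lemma Cs_sub: "Cs P i \<subseteq> {1..n}"
  using P_sub P_len unfolding Cs_def by fastforce

lemma P_disj: "i < length ns \<Longrightarrow> P ! i \<inter> Cs P i = {}"
proof -
  assume i: "i < length ns"
  have "Suc j \<notin> Cs P i" if j: "j < n" and s: "Suc j \<in> P ! i" for j
  proof -
    have "\<not> fi \<phi> ns i (replicate (ns ! i) False) ! j" using s P_nth[OF i] by (auto simp: topv_def)
    moreover have "vl n (Cs P i) ! j = (Suc j \<in> Cs P i)" by (rule vl_nth[OF j])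
    ultimately show ?thesis using chain[OF i] by simp
  qed
  show ?thesis
  proof (rule equals0I)
    fix x assume x: "x \<in> P ! i \<inter> Cs P i"
    then have "x \<in> {1..n}" using P_sub[OF i] by blast
    then obtain j where "x = Suc j" "j < n" by (metis Suc_le_eq Suc_pred' atLeastAtMost_iff less_eq_Suc_le zero_less_one order_less_le_trans)
    then show False using x \<open>\<And>j. j < n \<Longrightarrow> Suc j \<in> P ! i \<Longrightarrow> Suc j \<notin> Cs P i\<close> by blast
  qed
qed

lemma P_full: "Cs P (length P) = {1..n}"
proof -
  have l: "length ns - 1 < length ns" using ne by simp
  have "vl n (Cs P (length P)) = replicate n True"
    using chain[OF l] fi_end ne P_len by simp
  also have "\<dots> = vl n {1..n}" by (auto simp: vl_def map_replicate_const intro!: nth_equalityI)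
  finally show ?thesis using vl_inj Cs_sub by blast
qed

end

abbreviation "OP \<equiv> ordered_partitions"

lemma op_alt: "P \<in> OP n \<longleftrightarrow> (\<forall>i<length P. P ! i \<noteq> {} \<and> P ! i \<inter> Cs P i = {}) \<and> Cs P (length P) = {1..n}"
proof
  assume P: "P \<in> OP n"
  have "P ! i \<inter> Cs P i = {}" if "i < length P" for i
  proof -
    have "P ! i \<inter> P ! l = {}" if "l < i" for l using P \<open>i < length P\<close> that
      unfolding ordered_partitions_def by auto
    then show ?thesis unfolding Cs_def by auto
  qed
  then show "(\<forall>i<length P. P ! i \<noteq> {} \<and> P ! i \<inter> Cs P i = {}) \<and> Cs P (length P) = {1..n}"
    using P unfolding ordered_partitions_def by (auto simp: Cs_len)
next
  assume a: "(\<forall>i<length P. P ! i \<noteq> {} \<and> P ! i \<inter> Cs P i = {}) \<and> Cs P (length P) = {1..n}"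
  have d: "P ! i \<inter> P ! j = {}" if "i < length P" "j < length P" "i \<noteq> j" for i j
  proof (cases "i < j")
    case True
    then show ?thesis using a that nth_subset_Cs[of i j P] by blast
  next
    case False
    then show ?thesis using a that nth_subset_Cs[of j i P] by auto
  qed
  show "P \<in> OP n" unfolding ordered_partitions_def
    using a d by (auto simp: in_set_conv_nth Cs_len)
qed

context fixes n P assumes P: "P \<in> OP n"
begin
lemma opP_ne: "i < length P \<Longrightarrow> P ! i \<noteq> {}" using P op_alt by blast
lemma opP_disj: "i < length P \<Longrightarrow> P ! i \<inter> Cs P i = {}" using P op_alt by blast
lemma opP_full: "Cs P (length P) = {1..n}" using P op_alt by blast
lemma opP_Cs_sub: "Cs P i \<subseteq> {1..n}" using opP_full Cs_mono Cs_ge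
  by (metis nat_le_linear order_refl)
lemma opP_sub: "i < length P \<Longrightarrow> P ! i \<subseteq> {1..n}"
  using opP_Cs_sub nth_subset_Cs[of i "Suc i" P] by blast

lemma chain_le_iff: "a \<le> length P \<Longrightarrow> b \<le> length P \<Longrightarrow> Cs P a \<subseteq> Cs P b \<longleftrightarrow> a \<le> b"
proof
  assume ab: "a \<le> length P" "b \<le> length P" "Cs P a \<subseteq> Cs P b"
  show "a \<le> b"
  proof (rule ccontr)
    assume "\<not> a \<le> b"
    then have "b < a" "b < length P" using ab by auto
    then have "P ! b \<subseteq> Cs P a" by (rule nth_subset_Cs)
    then show False using ab(3) opP_ne[OF \<open>b < length P\<close>] opP_disj[OF \<open>b < length P\<close>] by blast
  qed
qed (rule Cs_mono)

lemma chain_eq_iff: "a \<le> length P \<Longrightarrow> b \<le> length P \<Longrightarrow> Cs P a = Cs P b \<longleftrightarrow> a = b"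
  using chain_le_iff by (metis order_antisym order_refl)

lemma Cs_lt_len: "i < length P \<Longrightarrow> Cs P i \<noteq> {1..n}"
  using chain_le_iff[of "length P" i] opP_full by auto
end

definition cuts :: "nat set list \<Rightarrow> nat set set" where
  "cuts P = Cs P ` {0..length P}"

definition mg :: "nat set list \<Rightarrow> nat \<Rightarrow> nat set list" where
  "mg P t = take t P @ [P ! t \<union> P ! Suc t] @ drop (Suc (Suc t)) P"

lemma merge_step_mg: "merge_step P Q \<longleftrightarrow> (\<exists>t. Suc t < length P \<and> Q = mg P t)"
  by (simp add: merge_step_def mg_def)

lemma mg_len: "Suc t < length P \<Longrightarrow> length (mg P t) = length P - 1"
  by (simp add: mg_def)

lemma mg_nth: "Suc t < length P \<Longrightarrow> l < length P - 1 \<Longrightarrow>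
  mg P t ! l = (if l < t then P ! l else if l = t then P ! t \<union> P ! Suc t else P ! Suc l)"
  by (auto simp: mg_def nth_append min_def)

lemma mg_Cs: assumes t: "Suc t < length P"
  shows "j \<le> length P - 1 \<Longrightarrow> Cs (mg P t) j = (if j \<le> t then Cs P j else Cs P (Suc j))"
proof (induction j)
  case 0 then show ?case by simp
next
  case (Suc j)
  have j: "j < length (mg P t)" using Suc.prems mg_len[OF t] by simp
  have "Cs (mg P t) (Suc j) = Cs (mg P t) j \<union> mg P t ! j" using Cs_Suc[OF j] .
  also have "\<dots> = (if Suc j \<le> t then Cs P (Suc j) else Cs P (Suc (Suc j)))"
  proof -
    have IH: "Cs (mg P t) j = (if j \<le> t then Cs P j else Cs P (Suc j))" using Suc by simp
    have m: "mg P t ! j = (if j < t then P ! j else if j = t then P ! t \<union> P ! Suc t else P ! Suc j)"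
      using mg_nth[OF t] j mg_len[OF t] by simp
    consider "j < t" | "j = t" | "j > t" by linarith
    then show ?thesis
    proof cases
      case 1 then show ?thesis using IH m Cs_Suc[of j P] t by simp
    next
      case 2 then show ?thesis using IH m Cs_Suc[of j P] Cs_Suc[of "Suc j" P] t by auto
    next
      case 3 then show ?thesis using IH m Cs_Suc[of "Suc j" P] j mg_len[OF t] by simp
    qed
  qed
  finally show ?case .
qed

lemma mg_op: assumes P: "P \<in> OP n" and t: "Suc t < length P" shows "mg P t \<in> OP n"
  unfolding op_alt[of "mg P t"]
proof (intro conjI allI impI)
  fix l assume l: "l < length (mg P t)"
  then have l': "l < length P - 1" using mg_len[OF t] by simp
  have m: "mg P t ! l = (if l < t then P ! l else if l = t then P ! t \<union> P ! Suc t else P ! Suc l)"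
    using mg_nth[OF t l'] .
  have C: "Cs (mg P t) l = (if l \<le> t then Cs P l else Cs P (Suc l))" using mg_Cs[OF t] l' by simp
  show "mg P t ! l \<noteq> {}" using m opP_ne[OF P] l' by auto
  show "mg P t ! l \<inter> Cs (mg P t) l = {}"
  proof -
    consider "l < t" | "l = t" | "l > t" by linarith
    then show ?thesis
    proof cases
      case 1 then show ?thesis using m C opP_disj[OF P, of l] l' by simp
    next
      case 2
      have "P ! Suc t \<inter> Cs P (Suc t) = {}" using opP_disj[OF P t] .
      moreover have "Cs P t \<subseteq> Cs P (Suc t)" by (rule Cs_mono) simp
      ultimately show ?thesis using 2 m C opP_disj[OF P, of t] t by auto
    next
      case 3 then show ?thesis using m C opP_disj[OF P, of "Suc l"] l' by simp
    qed
  qed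
next
  show "Cs (mg P t) (length (mg P t)) = {1..n}"
  proof -
    have "Suc (length P - 1) = length P" using t by simp
    then show ?thesis using mg_Cs[OF t, of "length P - 1"] mg_len[OF t] t opP_full[OF P] by simp
  qed
qed

lemma refine_op: "refine_le P Q \<Longrightarrow> P \<in> OP n \<Longrightarrow> Q \<in> OP n"
  unfolding refine_le_def
  by (induction rule: rtranclp_induct) (auto simp: merge_step_mg intro: mg_op)

lemma refine_len: "refine_le P Q \<Longrightarrow> length Q \<le> length P \<and> (length Q = length P \<longrightarrow> P = Q)"
  unfolding refine_le_def
proof (induction rule: rtranclp_induct)
  case base then show ?case by simp
next
  case (step y z)
  then show ?case by (auto simp: merge_step_mg mg_len)
qed

lemma refine_antisym: "refine_le P Q \<Longrightarrow> refine_le Q P \<Longrightarrow> P = Q"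
  using refine_len by (metis le_antisym)

lemma cuts_mg: assumes t: "Suc t < length P" shows "cuts (mg P t) \<subseteq> cuts P"
proof
  fix X assume "X \<in> cuts (mg P t)"
  then obtain j where j: "j \<le> length P - 1" "X = Cs (mg P t) j" by (auto simp: cuts_def mg_len[OF t])
  then show "X \<in> cuts P" using mg_Cs[OF t j(1)] t unfolding cuts_def by (auto split: if_splits)
qed

lemma refine_cuts: "refine_le P Q \<Longrightarrow> cuts Q \<subseteq> cuts P"
  unfolding refine_le_def
  by (induction rule: rtranclp_induct) (auto simp: merge_step_mg dest!: cuts_mg)

lemma cuts_eq: assumes P: "P \<in> OP n" and Q: "Q \<in> OP n" and e: "cuts P = cuts Q" shows "P = Q"
proof -
  have step: "Cs P i = Cs Q i" if "i \<le> length P" "i \<le> length Q" for i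
    using that
  proof (induction i)
    case 0 then show ?case by simp
  next
    case (Suc i)
    then have IH: "Cs P i = Cs Q i" by simp
    have A: "Cs Q (Suc i) \<subseteq> Cs P (Suc i)"
    proof -
      have "Cs P (Suc i) \<in> cuts P" using Suc.prems unfolding cuts_def by auto
      then have "Cs P (Suc i) \<in> cuts Q" using e by simp
      then obtain b where b: "b \<le> length Q" "Cs P (Suc i) = Cs Q b" by (auto simp: cuts_def)
      have "\<not> b \<le> i"
      proof
        assume "b \<le> i"
        then have "Cs Q b \<subseteq> Cs Q i" by (rule Cs_mono)
        then have "Cs P (Suc i) \<subseteq> Cs P i" using b IH by simp
        then show False using chain_le_iff[OF P, of "Suc i" i] Suc.prems by simp
      qed
      then show ?thesis using b Cs_mono[of "Suc i" b Q] by simp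
    qed
    have B: "Cs P (Suc i) \<subseteq> Cs Q (Suc i)"
    proof -
      have "Cs Q (Suc i) \<in> cuts Q" using Suc.prems unfolding cuts_def by auto
      then have "Cs Q (Suc i) \<in> cuts P" using e by simp
      then obtain b where b: "b \<le> length P" "Cs Q (Suc i) = Cs P b" by (auto simp: cuts_def)
      have "\<not> b \<le> i"
      proof
        assume "b \<le> i"
        then have "Cs P b \<subseteq> Cs P i" by (rule Cs_mono)
        then have "Cs Q (Suc i) \<subseteq> Cs Q i" using b IH by simp
        then show False using chain_le_iff[OF Q, of "Suc i" i] Suc.prems by simp
      qed
      then show ?thesis using b Cs_mono[of "Suc i" b P] by simp
    qed
    show ?case using A B by blast
  qed
  have len: "length P = length Q"
  proof (rule ccontr)
    assume "length P \<noteq> length Q"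
    then consider "length P < length Q" | "length Q < length P" by linarith
    then show False
    proof cases
      case 1
      have "Cs Q (length P) = {1..n}" using step[of "length P"] 1 opP_full[OF P] by simp
      then have "Cs Q (length Q) \<subseteq> Cs Q (length P)" using opP_full[OF Q] by simp
      then show False using chain_le_iff[OF Q, of "length Q" "length P"] 1 by simp
    next
      case 2
      have "Cs P (length Q) = {1..n}" using step[of "length Q"] 2 opP_full[OF Q] by simp
      then have "Cs P (length P) \<subseteq> Cs P (length Q)" using opP_full[OF P] by simp
      then show False using chain_le_iff[OF P, of "length P" "length Q"] 2 by simp
    qed
  qed
  show ?thesis
  proof (rule nth_equalityI)
    show "length P = length Q" by fact
    fix i assume i: "i < length P"
    have "P ! i = Cs P (Suc i) - Cs P i" using Cs_Suc[OF i] opP_disj[OF P i] by blast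
    moreover have "Q ! i = Cs Q (Suc i) - Cs Q i" using Cs_Suc[of i Q] i len opP_disj[OF Q, of i] by auto
    ultimately show "P ! i = Q ! i" using step[of i] step[of "Suc i"] i len by simp
  qed
qed

lemma cuts_basic: "P \<in> OP n \<Longrightarrow> {} \<in> cuts P \<and> {1..n} \<in> cuts P"
  unfolding cuts_def using opP_full by (metis Cs_0 atLeastAtMost_iff image_eqI le0 order_refl)

lemma cut_split:
  assumes P: "P \<in> OP n" and X: "X \<in> cuts P" and iP: "i \<le> length P" and ne: "X \<noteq> Cs P i"
    and i0: "0 < i" and il: "i < length P"
  shows "X \<in> cuts (mg P (i - 1))"
proof -
  have t: "Suc (i - 1) < length P" using i0 il by simp
  obtain j where j: "j \<le> length P" "X = Cs P j" using X by (auto simp: cuts_def)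
  have "j \<noteq> i" using ne j by auto
  show ?thesis
  proof (cases "j \<le> i - 1")
    case True
    then have "Cs (mg P (i - 1)) j = X" using mg_Cs[OF t, of j] j il by simp
    moreover have "j \<le> length (mg P (i - 1))" using True mg_len[OF t] il by simp
    ultimately show ?thesis unfolding cuts_def by force
  next
    case False
    then have ji: "j > i" using \<open>j \<noteq> i\<close> by simp
    have "\<not> (j - 1 \<le> i - 1)" "Suc (j - 1) = j" using ji i0 by auto
    then have "Cs (mg P (i - 1)) (j - 1) = X" using mg_Cs[OF t, of "j - 1"] j i0 by simp
    moreover have "j - 1 \<le> length (mg P (i - 1))" using j mg_len[OF t] by simp
    ultimately show ?thesis unfolding cuts_def by force
  qed
qed

lemma cuts_refine_aux:
  "\<forall>P. length P = N \<longrightarrow> P \<in> OP n \<longrightarrow> Q \<in> OP n \<longrightarrow> cuts Q \<subseteq> cuts P \<longrightarrow> refine_le P Q"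
proof (induction N rule: less_induct)
  case (less N)
  show ?case
  proof (intro allI impI)
    fix P assume N: "length P = N" and P: "P \<in> OP n" and Q: "Q \<in> OP n" and c: "cuts Q \<subseteq> cuts P"
    show "refine_le P Q"
    proof (cases "cuts P \<subseteq> cuts Q")
      case True
      then have "P = Q" using cuts_eq[OF P Q] c by blast
      then show ?thesis by (simp add: refine_le_def)
    next
      case False
      then obtain i where i: "i \<le> length P" "Cs P i \<notin> cuts Q" unfolding cuts_def image_subset_iff by auto
      have i0: "i \<noteq> 0" using i cuts_basic[OF Q] by (metis Cs_0)
      have il: "i \<noteq> length P" using i cuts_basic[OF Q] opP_full[OF P] by auto
      define P' where "P' = mg P (i - 1)"
      have t: "Suc (i - 1) < length P" using i i0 il by simp
      have P': "P' \<in> OP n" using mg_op[OF P t] by (simp add: P'_def)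
      have c': "cuts Q \<subseteq> cuts P'"
      proof
        fix X assume "X \<in> cuts Q"
        then show "X \<in> cuts P'" using cut_split[OF P _ i(1) _ _ ] c i i0 il P'_def by auto
      qed
      have "length P' < N" using mg_len[OF t] N t by (simp add: P'_def)
      then have "refine_le P' Q" using less P' Q c' by blast
      moreover have "merge_step P P'" using t by (auto simp: merge_step_mg P'_def)
      ultimately show ?thesis unfolding refine_le_def by (simp add: converse_rtranclp_into_rtranclp)
    qed
  qed
qed

lemma refine_iff_cuts: "P \<in> OP n \<Longrightarrow> Q \<in> OP n \<Longrightarrow> refine_le P Q \<longleftrightarrow> cuts Q \<subseteq> cuts P"
  using cuts_refine_aux refine_cuts by blast

lemma sub_cuts_exists_aux:
  "\<forall>P. length P = N \<longrightarrow> P \<in> OP n \<longrightarrow> {} \<in> K \<longrightarrow> {1..n} \<in> K \<longrightarrow> (\<exists>Q\<in>OP n. cuts Q = cuts P \<inter> K)"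
proof (induction N rule: less_induct)
  case (less N)
  show ?case
  proof (intro allI impI)
    fix P assume N: "length P = N" and P: "P \<in> OP n" and K: "{} \<in> K" "{1..n} \<in> K"
    show "\<exists>Q\<in>OP n. cuts Q = cuts P \<inter> K"
    proof (cases "cuts P \<subseteq> K")
      case True then show ?thesis using P by blast
    next
      case False
      then obtain i where i: "i \<le> length P" "Cs P i \<notin> K" unfolding cuts_def image_subset_iff by auto
      have i0: "i \<noteq> 0" using i K by (metis Cs_0)
      have il: "i \<noteq> length P" using i K opP_full[OF P] by auto
      define P' where "P' = mg P (i - 1)"
      have t: "Suc (i - 1) < length P" using i i0 il by simp
      have P': "P' \<in> OP n" using mg_op[OF P t] by (simp add: P'_def)
      have "cuts P' \<inter> K = cuts P \<inter> K"
      proof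
        show "cuts P' \<inter> K \<subseteq> cuts P \<inter> K" using cuts_mg[OF t] P'_def by auto
        show "cuts P \<inter> K \<subseteq> cuts P' \<inter> K"
        proof
          fix X assume X: "X \<in> cuts P \<inter> K"
          then have "X \<noteq> Cs P i" using i by auto
          then show "X \<in> cuts P' \<inter> K" using cut_split[OF P _ i(1) _ _] X i0 il i P'_def by auto
        qed
      qed
      moreover have "length P' < N" using mg_len[OF t] N t by (simp add: P'_def)
      ultimately show ?thesis using less P' K by metis
    qed
  qed
qed

lemma sub_cuts_exists: "P \<in> OP n \<Longrightarrow> {} \<in> K \<Longrightarrow> {1..n} \<in> K \<Longrightarrow> \<exists>Q\<in>OP n. cuts Q = cuts P \<inter> K"
  using sub_cuts_exists_aux by blast

definition IC :: "nat set list \<Rightarrow> nat set list \<Rightarrow> bool" where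
  "IC P Q \<longleftrightarrow> (\<forall>i<length P. \<exists>j<length Q. Cs Q j \<subseteq> Cs P i \<and> Cs P (Suc i) \<subseteq> Cs Q (Suc j))"

lemma cuts_IC: assumes P: "P \<in> OP n" and Q: "Q \<in> OP n" and c: "cuts Q \<subseteq> cuts P" shows "IC P Q"
  unfolding IC_def
proof (intro allI impI)
  fix i assume i: "i < length P"
  define S where "S = {j. j \<le> length Q \<and> Cs Q j \<subseteq> Cs P i}"
  have fin: "finite S" by (simp add: S_def)
  have "0 \<in> S" by (simp add: S_def)
  define j0 where "j0 = Max S"
  have j0S: "j0 \<in> S" using fin \<open>0 \<in> S\<close> j0_def Max_in by blast
  have j0l: "j0 < length Q"
  proof (rule ccontr)
    assume "\<not> j0 < length Q"
    then have "j0 = length Q" using j0S by (simp add: S_def)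
    then have "{1..n} \<subseteq> Cs P i" using j0S opP_full[OF Q] by (simp add: S_def)
    then show False using Cs_lt_len[OF P i] opP_Cs_sub[OF P, of i] by blast
  qed
  have "Suc j0 \<notin> S" using fin j0_def by (metis Max_ge Suc_n_not_le_n)
  then have ns: "\<not> Cs Q (Suc j0) \<subseteq> Cs P i" using j0l by (simp add: S_def)
  have "Cs Q (Suc j0) \<in> cuts P" using c j0l unfolding cuts_def by auto
  then obtain l where l: "l \<le> length P" "Cs Q (Suc j0) = Cs P l" by (auto simp: cuts_def)
  have "\<not> l \<le> i" using ns l Cs_mono[of l i P] by auto
  then have "Cs P (Suc i) \<subseteq> Cs Q (Suc j0)" using l Cs_mono[of "Suc i" l P] by simp
  moreover have "Cs Q j0 \<subseteq> Cs P i" using j0S by (simp add: S_def)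
  ultimately show "\<exists>j<length Q. Cs Q j \<subseteq> Cs P i \<and> Cs P (Suc i) \<subseteq> Cs Q (Suc j)" using j0l by blast
qed

lemma IC_cuts: assumes P: "P \<in> OP n" and Q: "Q \<in> OP n" and ic: "IC P Q" shows "cuts Q \<subseteq> cuts P"
proof
  fix X assume "X \<in> cuts Q"
  then obtain j where j: "j \<le> length Q" "X = Cs Q j" by (auto simp: cuts_def)
  define S where "S = {i. i \<le> length P \<and> Cs P i \<subseteq> Cs Q j}"
  have fin: "finite S" by (simp add: S_def)
  have "0 \<in> S" by (simp add: S_def)
  define i0 where "i0 = Max S"
  have i0S: "i0 \<in> S" using fin \<open>0 \<in> S\<close> i0_def Max_in by blast
  show "X \<in> cuts P"
  proof (cases "i0 = length P")
    case True
    then have "{1..n} \<subseteq> Cs Q j" using i0S opP_full[OF P] by (simp add: S_def)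
    then have "X = Cs P (length P)" using j opP_Cs_sub[OF Q, of j] opP_full[OF P] by auto
    then show ?thesis unfolding cuts_def by auto
  next
    case False
    then have i0l: "i0 < length P" using i0S by (simp add: S_def)
    obtain j' where j': "j' < length Q" "Cs Q j' \<subseteq> Cs P i0" "Cs P (Suc i0) \<subseteq> Cs Q (Suc j')"
      using ic i0l unfolding IC_def by blast
    have "Suc i0 \<notin> S" using fin i0_def by (metis Max_ge Suc_n_not_le_n)
    then have ns: "\<not> Cs P (Suc i0) \<subseteq> Cs Q j" using i0l by (simp add: S_def)
    have "\<not> Suc j' \<le> j" using ns j'(3) Cs_mono[of "Suc j'" j Q] by auto
    then have "j \<le> j'" by simp
    moreover have "Cs Q j' \<subseteq> Cs Q j" using j'(2) i0S by (auto simp: S_def)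
    then have "j' \<le> j" using chain_le_iff[OF Q, of j' j] j j' by simp
    ultimately have "j = j'" by simp
    then have "X = Cs P i0" using j j'(2) i0S by (auto simp: S_def)
    then show ?thesis using i0l unfolding cuts_def by auto
  qed
qed

lemma refine_iff_IC: "P \<in> OP n \<Longrightarrow> Q \<in> OP n \<Longrightarrow> refine_le P Q \<longleftrightarrow> IC P Q"
  using refine_iff_cuts cuts_IC IC_cuts by metis

lemma cnt_vl: "X \<subseteq> {1..n} \<Longrightarrow> cnt (vl n X) = card X"
proof -
  assume X: "X \<subseteq> {1..n}"
  have "cnt (vl n X) = card {j. j < n \<and> Suc j \<in> X}"
    unfolding cnt_def vl_def length_filter_conv_card by (intro arg_cong[where f=card]) auto
  also have "\<dots> = card (Suc ` {j. j < n \<and> Suc j \<in> X})" by (simp add: card_image)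
  also have "Suc ` {j. j < n \<and> Suc j \<in> X} = X"
  proof
    show "X \<subseteq> Suc ` {j. j < n \<and> Suc j \<in> X}"
    proof
      fix x assume x: "x \<in> X"
      then have "x \<in> {1..n}" using X by blast
      then have "x = Suc (x - 1)" "x - 1 < n" by auto
      then show "x \<in> Suc ` {j. j < n \<and> Suc j \<in> X}" using x by (metis (mono_tags, lifting) image_eqI mem_Collect_eq)
    qed
  qed auto
  finally show ?thesis .
qed

lemma cnt_take_less: "j < n \<Longrightarrow> Suc j \<in> X \<Longrightarrow> cnt (take j (vl n X)) < cnt (vl n X)"
proof -
  assume j: "j < n" and s: "Suc j \<in> X"
  have d: "drop j (vl n X) = True # drop (Suc j) (vl n X)"
    using j s by (metis Cons_nth_drop_Suc vl_len vl_nth)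
  have "cnt (vl n X) = cnt (take j (vl n X)) + cnt (drop j (vl n X))"
    unfolding cnt_def by (metis append_take_drop_id filter_append length_append)
  moreover have "cnt (drop j (vl n X)) = Suc (cnt (drop (Suc j) (vl n X)))" using d by (simp add: cnt_def)
  ultimately show ?thesis by simp
qed

definition FP :: "nat \<Rightarrow> nat set list \<Rightarrow> nat \<Rightarrow> cmap" where
  "FP n P i = Fc (vl n (P ! i)) (vl n (Cs P i))"

definition canon :: "nat \<Rightarrow> nat set list \<Rightarrow> subneck" where
  "canon n P = (map card P, \<lambda>m z. if z \<in> cells (necklace (map card P)) m
       then ccomp m (FP n P (fst z)) (snd z) else undefined)"

definition inface :: "nat \<Rightarrow> nat set list \<Rightarrow> nat \<Rightarrow> bool list \<Rightarrow> bool" where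
  "inface n P i w \<longleftrightarrow> length w = n \<and> (\<forall>j<n. (Suc j \<in> Cs P i \<longrightarrow> w ! j) \<and> (w ! j \<longrightarrow> Suc j \<in> Cs P (Suc i)))"

context fixes n P assumes P: "P \<in> OP n"
begin

lemma cnt_mask: "i < length P \<Longrightarrow> cnt (vl n (P ! i)) = card (P ! i)"
  using cnt_vl opP_sub[OF P] by blast

lemma FP_hom: "i < length P \<Longrightarrow> cube_hom (card (P ! i)) n (FP n P i)"
  using cube_hom_Fc[of "vl n (Cs P i)" "vl n (P ! i)"] cnt_mask by (simp add: FP_def)

lemma FP_len: "i < length P \<Longrightarrow> length xs = card (P ! i) \<Longrightarrow> length (FP n P i xs) = n"
  using FP_hom ch_len by blast

lemma FP_nth: "i < length P \<Longrightarrow> length xs = card (P ! i) \<Longrightarrow> j < n \<Longrightarrow>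
   FP n P i xs ! j = (if Suc j \<in> P ! i then xs ! cnt (take j (vl n (P ! i))) else Suc j \<in> Cs P i)"
  using fm_nth[of j "vl n (P ! i)" "vl n (Cs P i)" xs] cnt_mask
  by (simp add: FP_def Fc_def vl_nth)

lemma FP_face: assumes i: "i < length P" and xs: "length xs = card (P ! i)"
  shows "inface n P i (FP n P i xs)"
proof -
  have d: "P ! i \<inter> Cs P i = {}" using opP_disj[OF P i] .
  show ?thesis unfolding inface_def
    using FP_len[OF i xs] FP_nth[OF i xs] Cs_Suc[OF i] d by auto
qed

lemma FP_alpha: assumes i: "i < length P"
  shows "FP n P i (replicate (card (P ! i)) False) = vl n (Cs P i)"
proof (rule nth_equalityI)
  show "length (FP n P i (replicate (card (P ! i)) False)) = length (vl n (Cs P i))"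
    using FP_len[OF i] by simp
  fix j assume "j < length (FP n P i (replicate (card (P ! i)) False))"
  then have j: "j < n" using FP_len[OF i] by simp
  have "Suc j \<in> P ! i \<Longrightarrow> cnt (take j (vl n (P ! i))) < cnt (vl n (P ! i))"
    using cnt_take_less[OF j] by blast
  then show "FP n P i (replicate (card (P ! i)) False) ! j = vl n (Cs P i) ! j"
    using FP_nth[OF i _ j] j opP_disj[OF P i] cnt_mask[OF i] by (auto simp: vl_nth)
qed

lemma FP_omega: assumes i: "i < length P"
  shows "FP n P i (replicate (card (P ! i)) True) = vl n (Cs P (Suc i))"
proof (rule nth_equalityI)
  show "length (FP n P i (replicate (card (P ! i)) True)) = length (vl n (Cs P (Suc i)))"
    using FP_len[OF i] by simp
  fix j assume "j < length (FP n P i (replicate (card (P ! i)) True))"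
  then have j: "j < n" using FP_len[OF i] by simp
  show "FP n P i (replicate (card (P ! i)) True) ! j = vl n (Cs P (Suc i)) ! j"
    using FP_nth[OF i _ j] j cnt_take_less[OF j, of "P ! i"] cnt_mask[OF i] Cs_Suc[OF i]
    by (auto simp: vl_nth)
qed

lemma FP_inj: assumes i: "i < length P" shows "inj_on (FP n P i) {xs. length xs = card (P ! i)}"
proof (rule inj_onI)
  fix x y assume x: "x \<in> {xs. length xs = card (P ! i)}" and y: "y \<in> {xs. length xs = card (P ! i)}"
    and e: "FP n P i x = FP n P i y"
  have "rm (vl n (P ! i)) (FP n P i x) = x" using rm_fm x cnt_mask[OF i] by (simp add: FP_def Fc_def)
  moreover have "rm (vl n (P ! i)) (FP n P i y) = y" using rm_fm y cnt_mask[OF i] by (simp add: FP_def Fc_def)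
  ultimately show "x = y" using e by metis
qed

lemma FP_R: assumes i: "i < length P" and w: "inface n P i w"
  shows "FP n P i (Rc (vl n (P ! i)) w) = w"
proof -
  have lw: "length w = n" using w by (simp add: inface_def)
  have "\<forall>j<n. \<not> vl n (P ! i) ! j \<longrightarrow> w ! j = vl n (Cs P i) ! j"
    using w Cs_Suc[OF i] by (auto simp: inface_def vl_nth)
  then have "fm (vl n (P ! i)) (vl n (Cs P i)) (rm (vl n (P ! i)) w) = w"
    using fm_rm[of w "vl n (P ! i)" "vl n (Cs P i)"] lw by simp
  then show ?thesis using lw rm_len cnt_mask[OF i] by (simp add: FP_def Fc_def Rc_def)
qed

lemma Rc_hom: "i < length P \<Longrightarrow> cube_hom n (card (P ! i)) (Rc (vl n (P ! i)))"
  using cube_hom_Rc[of "vl n (P ! i)"] cnt_mask by simp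

lemma face_unique: assumes ii: "i < i'" "i' < length P" and w: "inface n P i w" "inface n P i' w"
  shows "w = vl n (Cs P i')"
proof (rule nth_equalityI)
  show "length w = length (vl n (Cs P i'))" using w by (simp add: inface_def)
  fix j assume "j < length w"
  then have j: "j < n" using w by (simp add: inface_def)
  have "Cs P (Suc i) \<subseteq> Cs P i'" using ii by (simp add: Cs_mono)
  then show "w ! j = vl n (Cs P i') ! j" using w j by (auto simp: inface_def vl_nth)
qed

lemma vl_full: "vl n {1..n} = replicate n True"
  by (auto simp: vl_def intro!: nth_equalityI)

lemma vl_empty: "vl n {} = replicate n False"
  by (auto simp: vl_def intro!: nth_equalityI)

lemma P_nonempty: "1 \<le> n \<Longrightarrow> P \<noteq> []"
  using opP_full[OF P] by auto

lemma card_pos: "i < length P \<Longrightarrow> 1 \<le> card (P ! i)"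
proof -
  assume i: "i < length P"
  have "finite (P ! i)" using opP_sub[OF P i] finite_subset by blast
  then have "0 < card (P ! i)" using opP_ne[OF P i] card_gt_0_iff by blast
  then show ?thesis by simp
qed

lemma canon_neck: "1 \<le> n \<Longrightarrow> is_neck (map card P)"
  using P_nonempty card_pos by (auto simp: is_neck_def in_set_conv_nth)

end

context fixes n P assumes P: "P \<in> OP n" and n1: "1 \<le> n"
begin

abbreviation "cns \<equiv> map card P"
abbreviation "cph \<equiv> snd (canon n P)"

lemma canon_fst: "fst (canon n P) = cns" by (simp add: canon_def)

lemma ccells: "(i, g) \<in> cells (necklace cns) m \<longleftrightarrow> i < length P \<and> cube_hom m (card (P ! i)) g
   \<and> \<not> (0 < i \<and> g = const_map m (replicate (card (P ! i)) False))"
  by (cases "i < length P") (auto simp: neck_cells)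

lemma cph_cell: "(i, g) \<in> cells (necklace cns) m \<Longrightarrow> cph m (i, g) = ccomp m (FP n P i) g"
  by (simp add: canon_def)

lemma cph_out: "z \<notin> cells (necklace cns) m \<Longrightarrow> cph m z = undefined"
  by (simp add: canon_def)

lemma cneck: "is_neck cns" using canon_neck[OF P n1] .

lemma c_hom: "cset_hom (necklace cns) (cube n) cph"
  unfolding cset_hom_def
proof (intro conjI allI impI)
  fix m z assume z: "z \<in> cells (necklace cns) m"
  obtain i g where zi: "z = (i, g)" by (cases z)
  have i: "i < length P" and g: "cube_hom m (card (P ! i)) g" using z zi ccells by auto
  show "cph m z \<in> cells (cube n) m"
    using cube_hom.hcomp[OF g FP_hom[OF P i]] cph_cell z zi by (simp add: cube_def)
next
  fix m k h z assume a: "cube_hom m k h \<and> z \<in> cells (necklace cns) k"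
  then have h: "cube_hom m k h" and z: "z \<in> cells (necklace cns) k" by auto
  obtain i g where zi: "z = (i, g)" by (cases z)
  have i: "i < length P" and g: "cube_hom k (card (P ! i)) g" using z zi ccells by auto
  have ac: "act (necklace cns) m k h z \<in> cells (necklace cns) m" using neck_act_cell[OF cneck z h] .
  have rhs: "act (cube n) m k h (cph k z) = ccomp m (FP n P i) (ccomp m g h)"
    using cph_cell z zi ccomp_assoc[OF h] by (simp add: cube_def)
  show "cph m (act (necklace cns) m k h z) = act (cube n) m k h (cph k z)"
  proof (cases "0 < i \<and> ccomp m g h = const_map m (replicate (card (P ! i)) False)")
    case True
    have e: "act (necklace cns) m k h z = (i - 1, const_map m (replicate (card (P ! (i - 1))) True))"
      using True i zi by (simp add: neck_act nnorm_def)
    have i1: "i - 1 < length P" using i by simp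
    have "cph m (act (necklace cns) m k h z) = const_map m (FP n P (i - 1) (replicate (card (P ! (i - 1))) True))"
      using cph_cell ac e by (simp add: ccomp_const)
    also have "\<dots> = const_map m (vl n (Cs P i))" using FP_omega[OF P i1] True by simp
    also have "\<dots> = ccomp m (FP n P i) (ccomp m g h)"
      using True FP_alpha[OF P i] by (simp add: ccomp_const)
    finally show ?thesis using rhs by simp
  next
    case False
    have e: "act (necklace cns) m k h z = (i, ccomp m g h)"
      using False i zi by (auto simp: neck_act nnorm_def)
    show ?thesis using cph_cell ac e rhs by simp
  qed
next
  fix m z assume "z \<notin> cells (necklace cns) m"
  then show "cph m z = undefined" by (rule cph_out)
qed

lemma c_mono: "cset_mono (necklace cns) cph"
  unfolding cset_mono_def
proof (intro allI inj_onI)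
  fix m z z' assume z: "z \<in> cells (necklace cns) m" and z': "z' \<in> cells (necklace cns) m"
    and e: "cph m z = cph m z'"
  obtain i g where zi: "z = (i, g)" by (cases z)
  obtain i' g' where zi': "z' = (i', g')" by (cases z')
  have i: "i < length P" and g: "cube_hom m (card (P ! i)) g" and gn: "\<not> (0 < i \<and> g = const_map m (replicate (card (P ! i)) False))"
    using z zi ccells by auto
  have i': "i' < length P" and g': "cube_hom m (card (P ! i')) g'" and gn': "\<not> (0 < i' \<and> g' = const_map m (replicate (card (P ! i')) False))"
    using z' zi' ccells by auto
  have E: "FP n P i (g xs) = FP n P i' (g' xs)" if xs: "length xs = m" for xs
  proof -
    have "ccomp m (FP n P i) g xs = ccomp m (FP n P i') g' xs" using e cph_cell z z' zi zi' by simp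
    then show ?thesis using xs by (simp add: ccomp_def)
  qed
  have lt: False if ii: "a < b" and ab: "(a = i \<and> b = i' \<and> ga = g \<and> gb = g') \<or> (a = i' \<and> b = i \<and> ga = g' \<and> gb = g)" for a b ga gb
  proof -
    have a: "a < length P" "cube_hom m (card (P ! a)) ga" and b: "b < length P" "cube_hom m (card (P ! b)) gb"
      and bn: "\<not> (0 < b \<and> gb = const_map m (replicate (card (P ! b)) False))"
      using ab i i' g g' gn gn' by auto
    have EE: "FP n P a (ga xs) = FP n P b (gb xs)" if "length xs = m" for xs using E[OF that] ab by auto
    have "gb xs = replicate (card (P ! b)) False" if xs: "length xs = m" for xs
    proof -
      have la: "length (ga xs) = card (P ! a)" using ch_len[OF a(2) xs] .
      have lb: "length (gb xs) = card (P ! b)" using ch_len[OF b(2) xs] .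
      have "FP n P b (gb xs) = vl n (Cs P b)"
        using face_unique[OF P ii b(1) FP_face[OF P a(1) la]] EE[OF xs] FP_face[OF P b(1) lb] by simp
      also have "\<dots> = FP n P b (replicate (card (P ! b)) False)" using FP_alpha[OF P b(1)] by simp
      finally show ?thesis using FP_inj[OF P b(1)] lb unfolding inj_on_def by simp
    qed
    then have "gb = const_map m (replicate (card (P ! b)) False)" using ccomp_into_const[OF b(2)] by blast
    then show False using bn ii by simp
  qed
  have "i = i'" using lt[of i i' g g'] lt[of i' i g' g] by (metis nat_neq_iff)
  moreover have "g = g'"
  proof -
    have "g xs = g' xs" if xs: "length xs = m" for xs
      using E[OF xs] FP_inj[OF P i] ch_len[OF g xs] ch_len[OF g' xs] \<open>i = i'\<close> unfolding inj_on_def by simp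
    moreover have "g xs = g' xs" if xs: "length xs \<noteq> m" for xs
      using ch_out[OF g xs] ch_out[OF g' xs] by simp
    ultimately show ?thesis by blast
  qed
  ultimately show "z = z'" using zi zi' by simp
qed

lemma canon_obj: "canon n P \<in> subneck_obj n"
proof -
  have st: "nstart cns \<in> cells (necklace cns) 0"
    using nstart_vc vc_cell[OF cneck] P_nonempty[OF P n1] by simp
  have en: "nend cns \<in> cells (necklace cns) 0"
    using nend_vc[OF cneck] vc_cell[OF cneck] P_nonempty[OF P n1] by simp
  have p0: "0 < length P" using P_nonempty[OF P n1] by simp
  have "cph 0 (nstart cns) = alpha n"
    using cph_cell[of 0 "const_map 0 (replicate (card (P ! 0)) False)" 0] st p0 FP_alpha[OF P p0]
    by (simp add: nstart_def ccomp_const alpha_def vl_empty[OF P])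
  moreover have "cph 0 (nend cns) = omega n"
  proof -
    have l: "length P - 1 < length P" and l2: "Suc (length P - 1) = length P" using p0 by auto
    have "last cns = card (P ! (length P - 1))" using p0 by (simp add: last_conv_nth)
    then show ?thesis
      using cph_cell[of "length P - 1" "const_map 0 (replicate (card (P ! (length P - 1))) True)" 0] en
         FP_omega[OF P l] l2 opP_full[OF P] vl_full[OF P]
      by (simp add: nend_def ccomp_const omega_def)
  qed
  ultimately show ?thesis
    unfolding subneck_obj_def using cneck c_hom c_mono by (simp add: canon_def)
qed

lemma Phi_canon: "PhiN n (canon n P) = P"
proof (rule nth_equalityI)
  show "length (PhiN n (canon n P)) = length P" by (simp add: PhiN_def canon_def)
  fix i assume "i < length (PhiN n (canon n P))"
  then have i: "i < length P" by (simp add: PhiN_def canon_def)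
  have tc: "(i, cid (card (P ! i))) \<in> cells (necklace cns) (card (P ! i))"
    using neck_top_cell[OF cneck, of i] i by simp
  have "fi cph cns i = FP n P i"
    using cph_cell[OF tc] ccomp_cid_right[OF FP_hom[OF P i]] i by (simp add: fi_def)
  then have "PhiN n (canon n P) ! i = Suc ` topv (card (P ! i)) n (FP n P i)"
    using i by (simp add: PhiN_def canon_def)
  also have "\<dots> = P ! i"
  proof -
    have "topv (card (P ! i)) n (FP n P i) = {j. j < n \<and> Suc j \<in> Cs P (Suc i) \<and> Suc j \<notin> Cs P i}"
      using FP_alpha[OF P i] FP_omega[OF P i] by (auto simp: topv_def vl_nth)
    also have "\<dots> = {j. j < n \<and> Suc j \<in> P ! i}" using Cs_Suc[OF i] opP_disj[OF P i] by auto
    finally have t: "topv (card (P ! i)) n (FP n P i) = {j. j < n \<and> Suc j \<in> P ! i}" .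
    show ?thesis unfolding t
    proof
      show "P ! i \<subseteq> Suc ` {j. j < n \<and> Suc j \<in> P ! i}"
      proof
        fix x assume x: "x \<in> P ! i"
        then have "x \<in> {1..n}" using opP_sub[OF P i] by blast
        then have "x = Suc (x - 1)" "x - 1 < n" by auto
        then show "x \<in> Suc ` {j. j < n \<and> Suc j \<in> P ! i}" using x by (metis (mono_tags, lifting) image_eqI mem_Collect_eq)
      qed
    qed auto
  qed
  finally show "PhiN n (canon n P) ! i = P ! i" .
qed

end

context obj
begin

lemma P_op: "P \<in> OP n"
  unfolding op_alt using P_ne P_disj P_full P_len by simp

lemma P_map_card: "map card P = ns"
  by (rule nth_equalityI) (auto simp: P_len P_card)

lemma fi_FP: assumes i: "i < length ns" shows "fi \<phi> ns i = FP n P i"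
proof (rule ext)
  fix xs :: "bool list"
  have iP: "i < length P" using i P_len by simp
  have k: "card (P ! i) = ns ! i" using P_card[OF i] .
  show "fi \<phi> ns i xs = FP n P i xs"
  proof (cases "length xs = ns ! i")
    case True
    have IF: "INV (ns ! i) n (FP n P i)" using cube_hom_INV FP_hom[OF P_op iP] k by metis
    have JF: "inj_on (FP n P i) {xs. length xs = ns ! i}" using FP_inj[OF P_op iP] k by simp
    have a: "fi \<phi> ns i (replicate (ns ! i) False) = FP n P i (replicate (ns ! i) False)"
      using chain[OF i] FP_alpha[OF P_op iP] k by simp
    have o: "fi \<phi> ns i (replicate (ns ! i) True) = FP n P i (replicate (ns ! i) True)"
      using chain[OF i] FP_omega[OF P_op iP] k by simp
    show ?thesis using INV_inj_unique[OF cube_hom_INV[OF fi_hom[OF i]] fi_inj[OF i] IF JF a o True] .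
  next
    case False
    then show ?thesis using ch_out[OF fi_hom[OF i]] ch_out[OF FP_hom[OF P_op iP]] k by simp
  qed
qed

lemma canon_Phi: "canon n P = (ns, \<phi>)"
proof -
  have "(\<lambda>m z. if z \<in> cells (necklace ns) m then ccomp m (FP n P (fst z)) (snd z) else undefined) = \<phi>"
  proof (rule ext, rule ext)
    fix m z
    show "(if z \<in> cells (necklace ns) m then ccomp m (FP n P (fst z)) (snd z) else undefined) = \<phi> m z"
    proof (cases "z \<in> cells (necklace ns) m")
      case True
      obtain i g where zi: "z = (i, g)" by (cases z)
      have i: "i < length ns" using True zi by (simp add: neck_cells)
      show ?thesis using True zi phi_cell fi_FP[OF i] by simp
    next
      case False then show ?thesis using phi_out by simp
    qed
  qed
  then show ?thesis unfolding canon_def P_map_card by simp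
qed

end

definition imgs :: "subneck \<Rightarrow> nat \<Rightarrow> cmap set" where
  "imgs x m = snd x m ` cells (necklace (fst x)) m"

lemma obj_start_cell: assumes "(ns, \<phi>) \<in> subneck_obj n" shows "nstart ns \<in> cells (necklace ns) 0"
proof -
  interpret obj n ns \<phi> using assms by (simp add: obj_def)
  have "0 < length ns" using ne by simp
  then show ?thesis using nstart_vc[of ns] vc_cell[OF neck, of 0 "replicate (ns ! 0) False"] by simp
qed

lemma obj_end_cell: assumes "(ns, \<phi>) \<in> subneck_obj n" shows "nend ns \<in> cells (necklace ns) 0"
proof -
  interpret obj n ns \<phi> using assms by (simp add: obj_def)
  have "length ns - 1 < length ns" using ne by simp
  then show ?thesis using nend_vc[OF neck] vc_cell[OF neck, of "length ns - 1" "replicate (ns ! (length ns - 1)) True"] by simp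
qed

lemma le_imgs:
  assumes x: "(ns, \<phi>) \<in> subneck_obj n" and y: "(ns', \<psi>) \<in> subneck_obj n"
  shows "subneck_le n (ns, \<phi>) (ns', \<psi>) \<longleftrightarrow> (\<forall>m. imgs (ns, \<phi>) m \<subseteq> imgs (ns', \<psi>) m)"
proof
  assume "subneck_le n (ns, \<phi>) (ns', \<psi>)"
  then obtain g where g: "subneck_hom n (ns, \<phi>) (ns', \<psi>) g" by (auto simp: subneck_le_def)
  show "\<forall>m. imgs (ns, \<phi>) m \<subseteq> imgs (ns', \<psi>) m"
  proof (intro allI subsetI)
    fix m h assume "h \<in> imgs (ns, \<phi>) m"
    then obtain z where z: "z \<in> cells (necklace ns) m" "h = \<phi> m z" by (auto simp: imgs_def)
    have H: "cset_hom (necklace ns) (necklace ns') g \<and> (\<forall>m z. z \<in> cells (necklace ns) m \<longrightarrow> \<psi> m (g m z) = \<phi> m z)"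
      using g by (simp add: subneck_hom_def)
    have "g m z \<in> cells (necklace ns') m" "\<psi> m (g m z) = \<phi> m z"
      using H z unfolding cset_hom_def by blast+
    then have "\<phi> m z \<in> \<psi> m ` cells (necklace ns') m" by (metis image_eqI)
    then show "h \<in> imgs (ns', \<psi>) m" using z by (simp add: imgs_def)
  qed
next
  assume I: "\<forall>m. imgs (ns, \<phi>) m \<subseteq> imgs (ns', \<psi>) m"
  interpret X: obj n ns \<phi> using x by (simp add: obj_def)
  interpret Y: obj n ns' \<psi> using y by (simp add: obj_def)
  have injY: "inj_on (\<psi> m) (cells (necklace ns') m)" for m using Y.mono by (simp add: cset_mono_def)
  have injX: "inj_on (\<phi> m) (cells (necklace ns) m)" for m using X.mono by (simp add: cset_mono_def)
  define g where "g m z = (if z \<in> cells (necklace ns) m then inv_into (cells (necklace ns') m) (\<psi> m) (\<phi> m z) else undefined)" for m z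
  have inimg: "\<phi> m z \<in> \<psi> m ` cells (necklace ns') m" if "z \<in> cells (necklace ns) m" for m z
    using I that unfolding imgs_def by auto
  have gc: "g m z \<in> cells (necklace ns') m" if "z \<in> cells (necklace ns) m" for m z
    using inv_into_into[OF inimg[OF that]] that by (simp add: g_def)
  have gp: "\<psi> m (g m z) = \<phi> m z" if "z \<in> cells (necklace ns) m" for m z
    using f_inv_into_f[OF inimg[OF that]] that by (simp add: g_def)
  have "subneck_hom n (ns, \<phi>) (ns', \<psi>) g"
    unfolding subneck_hom_def prod.case
  proof (intro conjI)
    show "cset_hom (necklace ns) (necklace ns') g"
      unfolding cset_hom_def
    proof (intro conjI allI impI)
      fix m z assume "z \<in> cells (necklace ns) m" then show "g m z \<in> cells (necklace ns') m" by (rule gc)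
    next
      fix m k h z assume a: "cube_hom m k h \<and> z \<in> cells (necklace ns) k"
      then have h: "cube_hom m k h" and z: "z \<in> cells (necklace ns) k" by auto
      have az: "act (necklace ns) m k h z \<in> cells (necklace ns) m" using neck_act_cell[OF X.neck z h] .
      have az': "act (necklace ns') m k h (g k z) \<in> cells (necklace ns') m" using neck_act_cell[OF Y.neck gc[OF z] h] .
      have "\<phi> m (act (necklace ns) m k h z) = ccomp m (\<phi> k z) h" using X.nat[OF h z] .
      also have "\<dots> = ccomp m (\<psi> k (g k z)) h" using gp[OF z] by simp
      also have "\<dots> = \<psi> m (act (necklace ns') m k h (g k z))" using Y.nat[OF h gc[OF z]] by simp
      finally have e: "\<phi> m (act (necklace ns) m k h z) = \<psi> m (act (necklace ns') m k h (g k z))" .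
      have "g m (act (necklace ns) m k h z) = inv_into (cells (necklace ns') m) (\<psi> m) (\<psi> m (act (necklace ns') m k h (g k z)))"
        using az e by (simp add: g_def)
      also have "\<dots> = act (necklace ns') m k h (g k z)" using inv_into_f_f[OF injY az'] .
      finally show "g m (act (necklace ns) m k h z) = act (necklace ns') m k h (g k z)" .
    next
      fix m z assume "z \<notin> cells (necklace ns) m" then show "g m z = undefined" by (simp add: g_def)
    qed
  next
    show "cset_mono (necklace ns) g"
      unfolding cset_mono_def
    proof (intro allI inj_onI)
      fix m z z' assume z: "z \<in> cells (necklace ns) m" and z': "z' \<in> cells (necklace ns) m" and e: "g m z = g m z'"
      have "\<phi> m z = \<phi> m z'" using gp[OF z] gp[OF z'] e by metis
      then show "z = z'" using injX z z' unfolding inj_on_def by blast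
    qed
  next
    have s: "nstart ns \<in> cells (necklace ns) 0" "nstart ns' \<in> cells (necklace ns') 0"
      using obj_start_cell x y by auto
    have "\<psi> 0 (g 0 (nstart ns)) = \<psi> 0 (nstart ns')"
      using gp[OF s(1)] x y by (simp add: subneck_obj_def)
    then show "g 0 (nstart ns) = nstart ns'" using injY gc[OF s(1)] s(2) unfolding inj_on_def by blast
  next
    have s: "nend ns \<in> cells (necklace ns) 0" "nend ns' \<in> cells (necklace ns') 0"
      using obj_end_cell x y by auto
    have "\<psi> 0 (g 0 (nend ns)) = \<psi> 0 (nend ns')"
      using gp[OF s(1)] x y by (simp add: subneck_obj_def)
    then show "g 0 (nend ns) = nend ns'" using injY gc[OF s(1)] s(2) unfolding inj_on_def by blast
  next
    show "\<forall>m z. z \<in> cells (necklace ns) m \<longrightarrow> \<psi> m (g m z) = \<phi> m z" using gp by blast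
  qed
  then show "subneck_le n (ns, \<phi>) (ns', \<psi>)" by (auto simp: subneck_le_def)
qed

lemma face_vl: assumes Q: "Q \<in> OP n" and X: "X \<subseteq> {1..n}" and f: "inface n Q j (vl n X)"
  shows "Cs Q j \<subseteq> X \<and> X \<subseteq> Cs Q (Suc j)"
proof -
  have A: "Suc j' \<in> Cs Q j \<longrightarrow> Suc j' \<in> X" "Suc j' \<in> X \<longrightarrow> Suc j' \<in> Cs Q (Suc j)" if "j' < n" for j'
    using f that by (auto simp: inface_def vl_nth)
  have B: "\<exists>j'. x = Suc j' \<and> j' < n" if "x \<in> {1..n}" for x
    using that by (intro exI[of _ "x - 1"]) auto
  show ?thesis
  proof
    show "Cs Q j \<subseteq> X"
    proof
      fix x assume x: "x \<in> Cs Q j"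
      then obtain j' where "x = Suc j'" "j' < n" using B opP_Cs_sub[OF Q] by blast
      then show "x \<in> X" using A x by blast
    qed
    show "X \<subseteq> Cs Q (Suc j)"
    proof
      fix x assume x: "x \<in> X"
      then obtain j' where "x = Suc j'" "j' < n" using B X by blast
      then show "x \<in> Cs Q (Suc j)" using A x by blast
    qed
  qed
qed

lemma canon_imgs:
  assumes P: "P \<in> OP n" and Q: "Q \<in> OP n" and n1: "1 \<le> n"
  shows "(\<forall>m. imgs (canon n P) m \<subseteq> imgs (canon n Q) m) \<longleftrightarrow> IC P Q"
proof
  assume I: "\<forall>m. imgs (canon n P) m \<subseteq> imgs (canon n Q) m"
  show "IC P Q" unfolding IC_def
  proof (intro allI impI)
    fix i assume i: "i < length P"
    define k where "k = card (P ! i)"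
    have tc: "(i, cid k) \<in> cells (necklace (map card P)) k"
      using neck_top_cell[OF canon_neck[OF P n1], of i] i by (simp add: k_def)
    have "snd (canon n P) k (i, cid k) = FP n P i"
      using cph_cell[OF P n1 tc] ccomp_cid_right[OF FP_hom[OF P i]] by (simp add: k_def)
    then have "FP n P i \<in> imgs (canon n P) k" using tc by (auto simp: imgs_def canon_fst[OF P n1] intro: image_eqI[of _ _ "(i, cid k)"])
    then have "FP n P i \<in> imgs (canon n Q) k" using I by blast
    then obtain z where z: "z \<in> cells (necklace (map card Q)) k" "FP n P i = snd (canon n Q) k z"
      by (auto simp: imgs_def canon_fst[OF Q n1])
    obtain j g where zj: "z = (j, g)" by (cases z)
    have j: "j < length Q" and g: "cube_hom k (card (Q ! j)) g" using z zj ccells[OF Q n1] by auto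
    have e: "FP n P i xs = FP n Q j (g xs)" if "length xs = k" for xs
      using z zj cph_cell[OF Q n1] that by (simp add: ccomp_def)
    have "inface n Q j (vl n (Cs P i))"
      using e[of "replicate k False"] FP_alpha[OF P i] FP_face[OF Q j ch_len[OF g]] by (simp add: k_def)
    then have a: "Cs Q j \<subseteq> Cs P i" using face_vl[OF Q opP_Cs_sub[OF P]] by blast
    have "inface n Q j (vl n (Cs P (Suc i)))"
      using e[of "replicate k True"] FP_omega[OF P i] FP_face[OF Q j ch_len[OF g]] by (simp add: k_def)
    then have b: "Cs P (Suc i) \<subseteq> Cs Q (Suc j)" using face_vl[OF Q opP_Cs_sub[OF P]] by blast
    show "\<exists>j<length Q. Cs Q j \<subseteq> Cs P i \<and> Cs P (Suc i) \<subseteq> Cs Q (Suc j)" using a b j by blast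
  qed
next
  assume ic: "IC P Q"
  show "\<forall>m. imgs (canon n P) m \<subseteq> imgs (canon n Q) m"
  proof (intro allI subsetI)
    fix m h assume "h \<in> imgs (canon n P) m"
    then obtain z where z: "z \<in> cells (necklace (map card P)) m" "h = snd (canon n P) m z"
      by (auto simp: imgs_def canon_fst[OF P n1])
    obtain i g where zi: "z = (i, g)" by (cases z)
    have i: "i < length P" and g: "cube_hom m (card (P ! i)) g" using z zi ccells[OF P n1] by auto
    have hdef: "h = ccomp m (FP n P i) g" using z zi cph_cell[OF P n1] by simp
    obtain j where j: "j < length Q" "Cs Q j \<subseteq> Cs P i" "Cs P (Suc i) \<subseteq> Cs Q (Suc j)"
      using ic i unfolding IC_def by blast
    have hh: "cube_hom m n h" using hdef cube_hom.hcomp[OF g FP_hom[OF P i]] by simp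
    have hface: "inface n Q j (h xs)" if "length xs = m" for xs
    proof -
      have "inface n P i (h xs)" using FP_face[OF P i ch_len[OF g that]] hdef that by (simp add: ccomp_def)
      then show ?thesis using j unfolding inface_def by blast
    qed
    define g' where "g' = ccomp m (Rc (vl n (Q ! j))) h"
    have g': "cube_hom m (card (Q ! j)) g'" unfolding g'_def using cube_hom.hcomp[OF hh Rc_hom[OF Q j(1)]] .
    have eq: "ccomp m (FP n Q j) g' = h"
    proof (rule ext)
      fix xs :: "bool list"
      show "ccomp m (FP n Q j) g' xs = h xs"
      proof (cases "length xs = m")
        case True
        then show ?thesis using FP_R[OF Q j(1) hface[OF True]] by (simp add: g'_def ccomp_def)
      next
        case False
        then show ?thesis using ch_out[OF hh False] by (simp add: ccomp_def)
      qed
    qed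
    show "h \<in> imgs (canon n Q) m"
    proof (cases "(j, g') \<in> cells (necklace (map card Q)) m")
      case True
      then have "snd (canon n Q) m (j, g') = h" using cph_cell[OF Q n1 True] eq by simp
      then show ?thesis using True by (auto simp: imgs_def canon_fst[OF Q n1] intro: image_eqI[of _ _ "(j, g')"])
    next
      case False
      then have jc: "0 < j" "g' = const_map m (replicate (card (Q ! j)) False)"
        using ccells[OF Q n1] j(1) g' by auto
      have hc: "h = const_map m (vl n (Cs Q j))"
        using eq jc FP_alpha[OF Q j(1)] by (simp add: ccomp_const)
      have j1: "j - 1 < length Q" using j by simp
      have pos: "1 \<le> card (Q ! (j - 1))" using card_pos[OF Q j1] .
      define c where "c = const_map m (replicate (card (Q ! (j - 1))) True)"
      have "const_map m (replicate (card (Q ! (j - 1))) True) \<noteq> const_map m (replicate (card (Q ! (j - 1))) False)"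
        using const_map_inj rep_neq[OF pos] by blast
      then have cc: "(j - 1, c) \<in> cells (necklace (map card Q)) m"
        using ccells[OF Q n1] j1 const_hom[of "replicate (card (Q ! (j - 1))) True"] by (simp add: c_def)
      have sj: "Suc (j - 1) = j" using jc by simp
      have "snd (canon n Q) m (j - 1, c) = h"
        using cph_cell[OF Q n1 cc] FP_omega[OF Q j1] sj hc by (simp add: c_def ccomp_const)
      then show ?thesis using cc by (auto simp: imgs_def canon_fst[OF Q n1] intro: image_eqI[of _ _ "(j - 1, c)"])
    qed
  qed
qed

lemma op_disj: "P \<in> OP n \<Longrightarrow> i < length P \<Longrightarrow> j < length P \<Longrightarrow> i \<noteq> j \<Longrightarrow> P ! i \<inter> P ! j = {}"
  by (simp add: ordered_partitions_def)

lemma op_nth_sub: "P \<in> OP n \<Longrightarrow> i < length P \<Longrightarrow> P ! i \<subseteq> {1..n}"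
proof -
  assume a: "P \<in> OP n" "i < length P"
  have "P ! i \<in> set P" using a(2) by simp
  then show ?thesis using a(1) unfolding ordered_partitions_def by blast
qed

lemma op_nth_ne: "P \<in> OP n \<Longrightarrow> i < length P \<Longrightarrow> P ! i \<noteq> {}"
proof -
  assume a: "P \<in> OP n" "i < length P"
  have "P ! i \<in> set P" using a(2) by simp
  then show ?thesis using a(1) unfolding ordered_partitions_def by blast
qed

lemma op_len_le: assumes P: "P \<in> OP n" shows "length P \<le> n"
proof -
  define e where "e l = (SOME x. x \<in> P ! l)" for l
  have e: "e l \<in> P ! l" if "l < length P" for l
    using op_nth_ne[OF P that] by (simp add: e_def some_in_eq)
  have "inj_on e {..<length P}"
  proof (rule inj_onI)
    fix a b assume a: "a \<in> {..<length P}" and b: "b \<in> {..<length P}" and ab: "e a = e b"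
    show "a = b"
    proof (rule ccontr)
      assume "a \<noteq> b"
      then show False using op_disj[OF P, of a b] e[of a] e[of b] a b ab by auto
    qed
  qed
  moreover have "e ` {..<length P} \<subseteq> {1..n}" using e op_nth_sub[OF P] by blast
  ultimately have "card {..<length P} \<le> card {1..n}" by (intro card_inj_on_le) auto
  then show ?thesis by simp
qed

definition sg :: "nat set list \<Rightarrow> bool" where
  "sg P \<longleftrightarrow> (\<forall>A\<in>set P. \<exists>a. A = {a})"

lemma sg_len: assumes P: "P \<in> OP n" and s: "sg P" shows "length P = n"
proof -
  define e where "e l = the_elem (P ! l)" for l
  have e: "P ! l = {e l}" if "l < length P" for l
    using s that unfolding sg_def e_def by (metis nth_mem the_elem_eq)
  have inj: "inj_on e {..<length P}"
  proof (rule inj_onI)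
    fix a b assume a: "a \<in> {..<length P}" and b: "b \<in> {..<length P}" and ab: "e a = e b"
    show "a = b"
    proof (rule ccontr)
      assume "a \<noteq> b"
      then show False using op_disj[OF P, of a b] e[of a] e[of b] a b ab by auto
    qed
  qed
  have "e ` {..<length P} = \<Union> (set P)"
  proof
    show "e ` {..<length P} \<subseteq> \<Union> (set P)"
    proof
      fix x assume "x \<in> e ` {..<length P}"
      then obtain l where l: "l < length P" "x = e l" by auto
      then have "x \<in> P ! l" using e by simp
      then show "x \<in> \<Union> (set P)" using l nth_mem by blast
    qed
    show "\<Union> (set P) \<subseteq> e ` {..<length P}"
    proof
      fix x assume "x \<in> \<Union> (set P)"
      then obtain l where l: "l < length P" "x \<in> P ! l" by (auto simp: in_set_conv_nth)
      then show "x \<in> e ` {..<length P}" using e by auto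
    qed
  qed
  also have "\<dots> = {1..n}" using P unfolding ordered_partitions_def by blast
  finally have "card (e ` {..<length P}) = n" by simp
  then show ?thesis using card_image[OF inj] by simp
qed

lemma split_op:
  assumes P: "P \<in> OP n" and i: "i < length P" and a: "a \<in> P ! i" and ne: "P ! i - {a} \<noteq> {}"
  defines "Q \<equiv> take i P @ [{a}, P ! i - {a}] @ drop (Suc i) P"
  shows "Q \<in> OP n" "merge_step Q P" "Q \<noteq> P"
proof -
  have lQ: "length Q = Suc (length P)" using i by (simp add: Q_def)
  define pi where "pi l = (if l \<le> i then l else l - 1)" for l
  have Qn: "Q ! l = (if l < i then P ! l else if l = i then {a} else if l = Suc i then P ! i - {a} else P ! (l - 1))"
    if "l < length Q" for l
  proof -
    have lt: "length (take i P) = i" using i by simp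
    consider "l < i" | "l = i" | "l = Suc i" | "l > Suc i" by linarith
    then show ?thesis
    proof cases
      case 1 then show ?thesis using lt by (simp add: Q_def nth_append)
    next
      case 2 then show ?thesis using lt by (simp add: Q_def nth_append)
    next
      case 3 then show ?thesis using lt by (simp add: Q_def nth_append)
    next
      case 4
      define r where "r = l - Suc (Suc i)"
      have r: "l = Suc (Suc (i + r))" using 4 by (simp add: r_def)
      have "Q ! l = drop (Suc i) P ! r" using lt r by (simp add: Q_def nth_append)
      also have "\<dots> = P ! (l - 1)" using r that lQ by simp
      finally show ?thesis using 4 by simp
    qed
  qed
  have sub: "Q ! l \<subseteq> P ! pi l" if "l < length Q" for l
  proof -
    consider "l < i" | "l = i" | "l = Suc i" | "l > Suc i" by linarith
    then show ?thesis
    proof cases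
      case 1 then show ?thesis using Qn[OF that] by (simp add: pi_def)
    next
      case 2 then show ?thesis using Qn[OF that] a by (simp add: pi_def)
    next
      case 3 then show ?thesis using Qn[OF that] by (auto simp: pi_def)
    next
      case 4 then show ?thesis using Qn[OF that] by (simp add: pi_def)
    qed
  qed
  have pil: "pi l < length P" if "l < length Q" for l using that lQ i by (auto simp: pi_def)
  show "Q \<in> OP n"
    unfolding ordered_partitions_def
  proof (intro CollectI conjI ballI allI impI)
    fix A assume "A \<in> set Q"
    then obtain l where l: "l < length Q" "A = Q ! l" by (auto simp: in_set_conv_nth)
    have "Q ! l \<noteq> {}"
    proof -
      consider "l < i" | "l = i" | "l = Suc i" | "l > Suc i" by linarith
      then show ?thesis
      proof cases
        case 1 then show ?thesis using Qn[OF l(1)] op_nth_ne[OF P, of l] i by simp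
      next
        case 2 then show ?thesis using Qn[OF l(1)] by simp
      next
        case 3 then show ?thesis using Qn[OF l(1)] ne by simp
      next
        case 4 then show ?thesis using Qn[OF l(1)] op_nth_ne[OF P, of "l - 1"] l(1) lQ by simp
      qed
    qed
    then show "A \<noteq> {}" using l by simp
  next
    fix l l' assume l: "l < length Q" and l': "l' < length Q" and ll: "l \<noteq> l'"
    show "Q ! l \<inter> Q ! l' = {}"
    proof (cases "pi l = pi l'")
      case False
      then show ?thesis using sub[OF l] sub[OF l'] op_disj[OF P pil[OF l] pil[OF l'] False] by blast
    next
      case True
      then have "(l = i \<and> l' = Suc i) \<or> (l = Suc i \<and> l' = i)" using ll by (auto simp: pi_def split: if_splits)
      then show ?thesis using Qn[OF l] Qn[OF l'] by auto
    qed
  next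
    have sP: "set P = set (take i P @ P ! i # drop (Suc i) P)"
      using id_take_nth_drop[OF i] by (rule arg_cong)
    have u1: "\<Union> (set Q) = \<Union> (set (take i P)) \<union> ({a} \<union> (P ! i - {a})) \<union> \<Union> (set (drop (Suc i) P))"
      unfolding Q_def by auto
    have u2: "{a} \<union> (P ! i - {a}) = P ! i" using a by blast
    have u3: "\<Union> (set P) = \<Union> (set (take i P)) \<union> P ! i \<union> \<Union> (set (drop (Suc i) P))"
      unfolding sP by auto
    have "\<Union> (set Q) = \<Union> (set P)" unfolding u1 u2 u3 ..
    moreover have "\<Union> (set P) = {1..n}" using P by (simp add: ordered_partitions_def)
    ultimately show "\<Union> (set Q) = {1..n}" by simp
  qed
  have "mg Q i = P"
  proof -
    have "take i Q = take i P" using i by (simp add: Q_def)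
    moreover have "Q ! i \<union> Q ! Suc i = P ! i" using Qn[of i] Qn[of "Suc i"] lQ i a by auto
    moreover have "drop (Suc (Suc i)) Q = drop (Suc i) P" using i by (simp add: Q_def)
    ultimately have "mg Q i = take i P @ P ! i # drop (Suc i) P" by (simp add: mg_def)
    then show ?thesis using id_take_nth_drop[OF i] by metis
  qed
  then show "merge_step Q P" using lQ i by (auto simp: merge_step_mg)
  show "Q \<noteq> P" using lQ by auto
qed

lemma minimal_iff_sg: assumes P: "P \<in> OP n"
  shows "(\<forall>Q\<in>OP n. refine_le Q P \<longrightarrow> Q = P) \<longleftrightarrow> sg P"
proof
  assume m: "\<forall>Q\<in>OP n. refine_le Q P \<longrightarrow> Q = P"
  show "sg P"
  proof (rule ccontr)
    assume "\<not> sg P"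
    then obtain i where i: "i < length P" and ns: "\<not> (\<exists>a. P ! i = {a})"
      unfolding sg_def by (auto simp: in_set_conv_nth)
    obtain a where a: "a \<in> P ! i" using op_nth_ne[OF P i] by blast
    have "P ! i - {a} \<noteq> {}" using ns a by blast
    note S = split_op[OF P i a this]
    have "refine_le (take i P @ [{a}, P ! i - {a}] @ drop (Suc i) P) P"
      using S(2) unfolding refine_le_def by blast
    then show False using m S(1) S(3) by blast
  qed
next
  assume s: "sg P"
  show "\<forall>Q\<in>OP n. refine_le Q P \<longrightarrow> Q = P"
  proof (intro ballI impI)
    fix Q assume Q: "Q \<in> OP n" and r: "refine_le Q P"
    have "length P = n" using sg_len[OF P s] .
    moreover have "length Q \<le> n" using op_len_le[OF Q] .
    ultimately show "Q = P" using refine_len[OF r] by simp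
  qed
qed

definition sing :: "nat \<Rightarrow> (nat \<Rightarrow> nat) \<Rightarrow> nat set list" where
  "sing n \<sigma> = map (\<lambda>i. {\<sigma> i}) [1..<Suc n]"

lemma sing_nth: "l < n \<Longrightarrow> sing n \<sigma> ! l = {\<sigma> (Suc l)}"
  unfolding sing_def by (subst nth_map) (simp_all del: upt_Suc)

lemma sing_bij: "bij_betw (sing n) {\<sigma>. \<sigma> permutes {1..n}} {P \<in> OP n. sg P}"
  unfolding bij_betw_def
proof (intro conjI)
  show "inj_on (sing n) {\<sigma>. \<sigma> permutes {1..n}}"
  proof (rule inj_onI)
    fix \<sigma> \<tau> assume s: "\<sigma> \<in> {\<sigma>. \<sigma> permutes {1..n}}" and t: "\<tau> \<in> {\<sigma>. \<sigma> permutes {1..n}}"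
      and e: "sing n \<sigma> = sing n \<tau>"
    show "\<sigma> = \<tau>"
    proof
      fix x show "\<sigma> x = \<tau> x"
      proof (cases "x \<in> {1..n}")
        case True
        then have "x - 1 < n" "Suc (x - 1) = x" by auto
        then show ?thesis using e sing_nth[of "x - 1" n \<sigma>] sing_nth[of "x - 1" n \<tau>] by auto
      next
        case False
        then show ?thesis using s t by (metis mem_Collect_eq permutes_not_in)
      qed
    qed
  qed
  show "sing n ` {\<sigma>. \<sigma> permutes {1..n}} = {P \<in> OP n. sg P}"
  proof
    show "sing n ` {\<sigma>. \<sigma> permutes {1..n}} \<subseteq> {P \<in> OP n. sg P}"
    proof
      fix P assume "P \<in> sing n ` {\<sigma>. \<sigma> permutes {1..n}}"
      then obtain \<sigma> where s: "\<sigma> permutes {1..n}" and P: "P = sing n \<sigma>" by auto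
      have "P \<in> OP n" unfolding ordered_partitions_def
      proof (intro CollectI conjI allI impI ballI)
        fix A assume "A \<in> set P" then show "A \<noteq> {}" using P by (auto simp: sing_def simp del: upt_Suc)
      next
        fix i j assume "i < length P" "j < length P" "i \<noteq> j"
        moreover have "length P = n" using P by (simp add: sing_def)
        ultimately show "P ! i \<inter> P ! j = {}"
          using P sing_nth[of i n \<sigma>] sing_nth[of j n \<sigma>] permutes_inj[OF s] by (auto simp: inj_eq)
      next
        have "\<Union> (set P) = \<sigma> ` {1..n}" using P by (auto simp: sing_def atLeastLessThanSuc_atLeastAtMost simp del: upt_Suc)
        then show "\<Union> (set P) = {1..n}" using permutes_image[OF s] by simp
      qed
      moreover have "sg P" using P by (auto simp: sg_def sing_def simp del: upt_Suc)
      ultimately show "P \<in> {P \<in> OP n. sg P}" by simp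
    qed
  next
    show "{P \<in> OP n. sg P} \<subseteq> sing n ` {\<sigma>. \<sigma> permutes {1..n}}"
    proof
      fix P assume "P \<in> {P \<in> OP n. sg P}"
      then have P: "P \<in> OP n" and s: "sg P" by auto
      have len: "length P = n" using sg_len[OF P s] .
      define e where "e l = the_elem (P ! l)" for l
      have e: "P ! l = {e l}" if "l < length P" for l
        using s that unfolding sg_def e_def by (metis nth_mem the_elem_eq)
      define \<sigma> where "\<sigma> i = (if i \<in> {1..n} then e (i - 1) else i)" for i
      have inj: "inj_on \<sigma> {1..n}"
      proof (rule inj_onI)
        fix a b assume a: "a \<in> {1..n}" and b: "b \<in> {1..n}" and ab: "\<sigma> a = \<sigma> b"
        show "a = b"
        proof (rule ccontr)
          assume "a \<noteq> b"
          then have ne: "a - 1 \<noteq> b - 1" using a b by auto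
          have l: "a - 1 < length P" "b - 1 < length P" using a b len by auto
          have "\<sigma> a = e (a - 1)" "\<sigma> b = e (b - 1)" using a b by (simp_all add: \<sigma>_def)
          then have "e (a - 1) \<in> P ! (a - 1) \<inter> P ! (b - 1)" using e[OF l(1)] e[OF l(2)] ab by simp
          then show False using op_disj[OF P l ne] by blast
        qed
      qed
      have img: "\<sigma> ` {1..n} \<subseteq> {1..n}"
      proof
        fix y assume "y \<in> \<sigma> ` {1..n}"
        then obtain x where x: "x \<in> {1..n}" "y = e (x - 1)" by (auto simp: \<sigma>_def)
        then have "x - 1 < length P" using len by auto
        then show "y \<in> {1..n}" using e op_nth_sub[OF P] x by blast
      qed
      have "\<sigma> ` {1..n} = {1..n}"
        using img inj by (simp add: card_image card_subset_eq)
      then have "bij_betw \<sigma> {1..n} {1..n}" using inj by (simp add: bij_betw_def)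
      moreover have "\<sigma> x = x" if "x \<notin> {1..n}" for x
        unfolding \<sigma>_def by (rule if_not_P[OF that])
      ultimately have sp: "\<sigma> permutes {1..n}" by (rule bij_imp_permutes)
      have "sing n \<sigma> = P"
      proof (rule nth_equalityI)
        show "length (sing n \<sigma>) = length P" using len by (simp add: sing_def)
        fix l assume "l < length (sing n \<sigma>)"
        then have l: "l < n" by (simp add: sing_def del: upt_Suc)
        then show "sing n \<sigma> ! l = P ! l" using sing_nth[OF l] e[of l] len by (simp add: \<sigma>_def)
      qed
      then show "P \<in> sing n ` {\<sigma>. \<sigma> permutes {1..n}}" using sp by blast
    qed
  qed
qed

lemma L_obj: assumes "x \<in> subneck_obj n" shows "PhiN n x \<in> OP n \<and> canon n (PhiN n x) = x"
proof -
  obtain ns \<phi> where x: "x = (ns, \<phi>)" by (cases x)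
  interpret obj n ns \<phi> using assms x by (simp add: obj_def)
  show ?thesis using P_op canon_Phi x by simp
qed

lemma L_bij: assumes n1: "1 \<le> n" shows "bij_betw (PhiN n) (subneck_obj n) (OP n)"
  unfolding bij_betw_def
proof
  show "inj_on (PhiN n) (subneck_obj n)"
    by (rule inj_onI) (metis L_obj)
  show "PhiN n ` subneck_obj n = OP n"
  proof
    show "PhiN n ` subneck_obj n \<subseteq> OP n" using L_obj by blast
    show "OP n \<subseteq> PhiN n ` subneck_obj n"
    proof
      fix P assume P: "P \<in> OP n"
      then have "canon n P \<in> subneck_obj n" "PhiN n (canon n P) = P"
        using canon_obj[OF P n1] Phi_canon[OF P n1] by auto
      then show "P \<in> PhiN n ` subneck_obj n" by (metis image_eqI)
    qed
  qed
qed

lemma L_ord: assumes n1: "1 \<le> n" and x: "x \<in> subneck_obj n" and y: "y \<in> subneck_obj n"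
  shows "subneck_le n x y \<longleftrightarrow> refine_le (PhiN n x) (PhiN n y)"
proof -
  obtain ns \<phi> where xp: "x = (ns, \<phi>)" by (cases x)
  obtain ns' \<psi> where yp: "y = (ns', \<psi>)" by (cases y)
  have Px: "PhiN n x \<in> OP n" and cx: "canon n (PhiN n x) = x" using L_obj[OF x] by auto
  have Py: "PhiN n y \<in> OP n" and cy: "canon n (PhiN n y) = y" using L_obj[OF y] by auto
  have "subneck_le n x y \<longleftrightarrow> (\<forall>m. imgs x m \<subseteq> imgs y m)"
    using le_imgs[of ns \<phi> n ns' \<psi>] x y xp yp by simp
  also have "\<dots> \<longleftrightarrow> (\<forall>m. imgs (canon n (PhiN n x)) m \<subseteq> imgs (canon n (PhiN n y)) m)" using cx cy by simp
  also have "\<dots> \<longleftrightarrow> IC (PhiN n x) (PhiN n y)" using canon_imgs[OF Px Py n1] .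
  also have "\<dots> \<longleftrightarrow> refine_le (PhiN n x) (PhiN n y)" using refine_iff_IC[OF Px Py] by simp
  finally show ?thesis .
qed

lemma L_thin: assumes y: "y \<in> subneck_obj n" and g: "subneck_hom n x y g" and g': "subneck_hom n x y g'"
  shows "g = g'"
proof -
  obtain ns \<phi> where xp: "x = (ns, \<phi>)" by (cases x)
  obtain ns' \<psi> where yp: "y = (ns', \<psi>)" by (cases y)
  have G: "cset_hom (necklace ns) (necklace ns') g \<and> (\<forall>m z. z \<in> cells (necklace ns) m \<longrightarrow> \<psi> m (g m z) = \<phi> m z)"
    using g xp yp by (simp add: subneck_hom_def)
  have G': "cset_hom (necklace ns) (necklace ns') g' \<and> (\<forall>m z. z \<in> cells (necklace ns) m \<longrightarrow> \<psi> m (g' m z) = \<phi> m z)"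
    using g' xp yp by (simp add: subneck_hom_def)
  have inj: "inj_on (\<psi> m) (cells (necklace ns') m)" for m
    using y yp by (simp add: subneck_obj_def cset_mono_def)
  show ?thesis
  proof (rule ext, rule ext)
    fix m z
    show "g m z = g' m z"
    proof (cases "z \<in> cells (necklace ns) m")
      case True
      have c: "g m z \<in> cells (necklace ns') m" "g' m z \<in> cells (necklace ns') m"
        using G G' True unfolding cset_hom_def by blast+
      have "\<psi> m (g m z) = \<phi> m z" using G True by blast
      moreover have "\<psi> m (g' m z) = \<phi> m z" using G' True by blast
      ultimately have "\<psi> m (g m z) = \<psi> m (g' m z)" by simp
      then show ?thesis using inj c unfolding inj_on_def by blast
    next
      case False
      have "g m z = undefined" using G False unfolding cset_hom_def by blast
      moreover have "g' m z = undefined" using G' False unfolding cset_hom_def by blast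
      ultimately show ?thesis by simp
    qed
  qed
qed

theorem propositionB1:
  fixes n :: nat
  assumes "1 \<le> n"
  shows
    \<comment> \<open>SubNeck is thin ...\<close>
    "(\<forall>x\<in>subneck_obj n. \<forall>y\<in>subneck_obj n. \<forall>g g'.
        subneck_hom n x y g \<and> subneck_hom n x y g' \<longrightarrow> g = g')
    \<comment> \<open>... and antisymmetric, i.e. a poset\<close>
   \<and> (\<forall>x\<in>subneck_obj n. \<forall>y\<in>subneck_obj n.
        subneck_le n x y \<and> subneck_le n y x \<longrightarrow> x = y)
    \<comment> \<open>poset isomorphism with ordered partitions under inverse refinement\<close>
   \<and> (\<exists>\<Phi>. bij_betw \<Phi> (subneck_obj n) (ordered_partitions n)
        \<and> (\<forall>x\<in>subneck_obj n. \<forall>y\<in>subneck_obj n.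
              subneck_le n x y \<longleftrightarrow> refine_le (\<Phi> x) (\<Phi> y))
        \<and> (\<exists>t\<in>subneck_obj n. \<Phi> t = [{1..n}] \<and> (\<forall>x\<in>subneck_obj n. subneck_le n x t))
        \<and> bij_betw (\<lambda>\<sigma>. inv_into (subneck_obj n) \<Phi> (map (\<lambda>i. {\<sigma> i}) [1..<Suc n]))
             {\<sigma>. \<sigma> permutes {1..n}}
             {x\<in>subneck_obj n. \<forall>y\<in>subneck_obj n. subneck_le n y x \<longrightarrow> y = x})
    \<comment> \<open>all (nonempty) least upper bounds exist\<close>
   \<and> (\<forall>S. S \<subseteq> subneck_obj n \<and> S \<noteq> {} \<longrightarrow>
        (\<exists>u\<in>subneck_obj n. (\<forall>s\<in>S. subneck_le n s u)
           \<and> (\<forall>v\<in>subneck_obj n. (\<forall>s\<in>S. subneck_le n s v) \<longrightarrow> subneck_le n u v)))"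
proof -
  note n1 = assms
  define OB where "OB = subneck_obj n"
  define \<Phi> where "\<Phi> = PhiN n"
  have bij: "bij_betw \<Phi> OB (OP n)" using L_bij[OF n1] by (simp add: \<Phi>_def OB_def)
  have inj: "inj_on \<Phi> OB" using bij by (simp add: bij_betw_def)
  have ord: "\<forall>x\<in>OB. \<forall>y\<in>OB. subneck_le n x y \<longleftrightarrow> refine_le (\<Phi> x) (\<Phi> y)"
    using L_ord[OF n1] by (simp add: \<Phi>_def OB_def)
  have PO: "\<Phi> x \<in> OP n" if "x \<in> OB" for x using L_obj that by (simp add: \<Phi>_def OB_def)
  have cPhi: "canon n (\<Phi> x) = x" if "x \<in> OB" for x using L_obj that by (simp add: \<Phi>_def OB_def)
  have cO: "canon n P \<in> OB" if "P \<in> OP n" for P using canon_obj[OF that n1] by (simp add: OB_def)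
  have Phic: "\<Phi> (canon n P) = P" if "P \<in> OP n" for P using Phi_canon[OF that n1] by (simp add: \<Phi>_def)
  have thin: "\<forall>x\<in>OB. \<forall>y\<in>OB. \<forall>g g'. subneck_hom n x y g \<and> subneck_hom n x y g' \<longrightarrow> g = g'"
    using L_thin by (auto simp: OB_def)
  have antisym: "\<forall>x\<in>OB. \<forall>y\<in>OB. subneck_le n x y \<and> subneck_le n y x \<longrightarrow> x = y"
  proof (intro ballI impI)
    fix x y assume x: "x \<in> OB" and y: "y \<in> OB" and "subneck_le n x y \<and> subneck_le n y x"
    then have "\<Phi> x = \<Phi> y" using ord refine_antisym by blast
    then show "x = y" using inj x y unfolding inj_on_def by blast
  qed
  have T: "[{1..n}] \<in> OP n" using n1 by (auto simp: ordered_partitions_def)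
  have top: "\<exists>t\<in>OB. \<Phi> t = [{1..n}] \<and> (\<forall>x\<in>OB. subneck_le n x t)"
  proof (intro bexI conjI ballI)
    show "canon n [{1..n}] \<in> OB" using cO[OF T] .
    show "\<Phi> (canon n [{1..n}]) = [{1..n}]" using Phic[OF T] .
    fix x assume x: "x \<in> OB"
    have "cuts [{1..n}] \<subseteq> cuts (\<Phi> x)"
    proof
      fix X assume "X \<in> cuts [{1..n}]"
      then obtain j where "j \<le> 1" "X = Cs [{1..n}] j" by (auto simp: cuts_def)
      then have "X = {} \<or> X = {1..n}" using Cs_len[of "[{1..n}]"] by (cases j) auto
      then show "X \<in> cuts (\<Phi> x)" using cuts_basic[OF PO[OF x]] by auto
    qed
    then have "refine_le (\<Phi> x) [{1..n}]" using refine_iff_cuts[OF PO[OF x] T] by simp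
    then show "subneck_le n x (canon n [{1..n}])" using ord x cO[OF T] Phic[OF T] by simp
  qed
  have invc: "inv_into OB \<Phi> P = canon n P" if "P \<in> OP n" for P
    using inv_into_f_eq[OF inj cO[OF that] Phic[OF that]] .
  define M where "M = {x\<in>OB. \<forall>y\<in>OB. subneck_le n y x \<longrightarrow> y = x}"
  have Meq: "M = canon n ` {P \<in> OP n. sg P}"
  proof
    show "M \<subseteq> canon n ` {P \<in> OP n. sg P}"
    proof
      fix x assume xM: "x \<in> M"
      then have x: "x \<in> OB" by (simp add: M_def)
      have "\<forall>Q\<in>OP n. refine_le Q (\<Phi> x) \<longrightarrow> Q = \<Phi> x"
      proof (intro ballI impI)
        fix Q assume Q: "Q \<in> OP n" and r: "refine_le Q (\<Phi> x)"
        have "subneck_le n (canon n Q) x" using ord cO[OF Q] x Phic[OF Q] r by simp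
        then have "canon n Q = x" using xM cO[OF Q] by (simp add: M_def)
        then show "Q = \<Phi> x" using Phic[OF Q] by simp
      qed
      then have "sg (\<Phi> x)" using minimal_iff_sg[OF PO[OF x]] by simp
      then show "x \<in> canon n ` {P \<in> OP n. sg P}" using PO[OF x] cPhi[OF x] by (metis (mono_tags, lifting) image_eqI mem_Collect_eq)
    qed
    show "canon n ` {P \<in> OP n. sg P} \<subseteq> M"
    proof
      fix x assume "x \<in> canon n ` {P \<in> OP n. sg P}"
      then obtain P where P: "P \<in> OP n" "sg P" "x = canon n P" by auto
      have x: "x \<in> OB" using cO P by simp
      have "\<forall>y\<in>OB. subneck_le n y x \<longrightarrow> y = x"
      proof (intro ballI impI)
        fix y assume y: "y \<in> OB" and le: "subneck_le n y x"
        then have "refine_le (\<Phi> y) P" using ord x P Phic by auto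
        then have "\<Phi> y = P" using minimal_iff_sg[OF P(1)] P(2) PO[OF y] by blast
        then show "y = x" using cPhi[OF y] P by simp
      qed
      then show "x \<in> M" using x by (simp add: M_def)
    qed
  qed
  have minb: "bij_betw (\<lambda>\<sigma>. inv_into OB \<Phi> (map (\<lambda>i. {\<sigma> i}) [1..<Suc n])) {\<sigma>. \<sigma> permutes {1..n}} M"
  proof -
    have cinj: "inj_on (canon n) {P \<in> OP n. sg P}"
    proof (rule inj_onI)
      fix P Q assume P: "P \<in> {P \<in> OP n. sg P}" and Q: "Q \<in> {P \<in> OP n. sg P}" and e: "canon n P = canon n Q"
      have "P = \<Phi> (canon n P)" using Phic P by simp
      also have "\<dots> = \<Phi> (canon n Q)" using e by simp
      also have "\<dots> = Q" using Phic Q by simp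
      finally show "P = Q" .
    qed
    have cb: "bij_betw (canon n) {P \<in> OP n. sg P} M"
      using bij_betw_imageI[OF cinj Meq[symmetric]] .
    have b1: "bij_betw (canon n \<circ> sing n) {\<sigma>. \<sigma> permutes {1..n}} M"
      using bij_betw_trans[OF sing_bij cb] .
    have eqs: "(canon n \<circ> sing n) \<sigma> = inv_into OB \<Phi> (map (\<lambda>i. {\<sigma> i}) [1..<Suc n])"
      if "\<sigma> \<in> {\<sigma>. \<sigma> permutes {1..n}}" for \<sigma>
    proof -
      have sOP: "sing n \<sigma> \<in> OP n" using sing_bij that unfolding bij_betw_def by blast
      have "inv_into OB \<Phi> (sing n \<sigma>) = canon n (sing n \<sigma>)" using invc[OF sOP] .
      then show ?thesis unfolding sing_def[symmetric] comp_def by simp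
    qed
    have "bij_betw (canon n \<circ> sing n) {\<sigma>. \<sigma> permutes {1..n}} M =
          bij_betw (\<lambda>\<sigma>. inv_into OB \<Phi> (map (\<lambda>i. {\<sigma> i}) [1..<Suc n])) {\<sigma>. \<sigma> permutes {1..n}} M"
      by (rule bij_betw_cong) (rule eqs)
    then show ?thesis using b1 by simp
  qed
  have lub: "\<forall>S. S \<subseteq> OB \<and> S \<noteq> {} \<longrightarrow>
        (\<exists>u\<in>OB. (\<forall>s\<in>S. subneck_le n s u) \<and> (\<forall>v\<in>OB. (\<forall>s\<in>S. subneck_le n s v) \<longrightarrow> subneck_le n u v))"
  proof (intro allI impI)
    fix S assume S: "S \<subseteq> OB \<and> S \<noteq> {}"
    then obtain s0 where s0: "s0 \<in> S" by blast
    define K where "K = {X. \<forall>s\<in>S. X \<in> cuts (\<Phi> s)}"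
    have cb: "{} \<in> cuts (\<Phi> s) \<and> {1..n} \<in> cuts (\<Phi> s)" if "s \<in> S" for s
    proof -
      have "s \<in> OB" using that S by blast
      then show ?thesis using cuts_basic[OF PO] by blast
    qed
    have K0: "{} \<in> K" "{1..n} \<in> K" unfolding K_def using cb by blast+
    have s0O: "s0 \<in> OB" using s0 S by blast
    obtain U where U: "U \<in> OP n" "cuts U = cuts (\<Phi> s0) \<inter> K"
      using sub_cuts_exists[OF PO[OF s0O] K0(1) K0(2)] by blast
    have "K \<subseteq> cuts (\<Phi> s0)" using s0 unfolding K_def by blast
    then have UK: "cuts U = K" using U by blast
    show "\<exists>u\<in>OB. (\<forall>s\<in>S. subneck_le n s u) \<and> (\<forall>v\<in>OB. (\<forall>s\<in>S. subneck_le n s v) \<longrightarrow> subneck_le n u v)"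
    proof (intro bexI conjI ballI impI)
      show "canon n U \<in> OB" using cO[OF U(1)] .
      fix s assume s: "s \<in> S"
      have sO: "s \<in> OB" using s S by blast
      have "cuts U \<subseteq> cuts (\<Phi> s)" using UK s unfolding K_def by blast
      then have "refine_le (\<Phi> s) U" using refine_iff_cuts[OF PO[OF sO] U(1)] by simp
      then show "subneck_le n s (canon n U)" using ord[rule_format, OF sO cO[OF U(1)]] Phic[OF U(1)] by simp
    next
      fix v assume v: "v \<in> OB" and all: "\<forall>s\<in>S. subneck_le n s v"
      have "cuts (\<Phi> v) \<subseteq> cuts (\<Phi> s)" if s: "s \<in> S" for s
      proof -
        have sO: "s \<in> OB" using s S by blast
        have "refine_le (\<Phi> s) (\<Phi> v)" using all s ord[rule_format, OF sO v] by simp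
        then show ?thesis using refine_cuts by blast
      qed
      then have "cuts (\<Phi> v) \<subseteq> cuts U" using UK unfolding K_def by blast
      then have "refine_le U (\<Phi> v)" using refine_iff_cuts[OF U(1) PO[OF v]] by simp
      then show "subneck_le n (canon n U) v" using ord v cO[OF U(1)] Phic[OF U(1)] by simp
    qed
  qed
  have bij': "bij_betw \<Phi> (subneck_obj n) (ordered_partitions n)" using bij by (simp add: OB_def)
  have ord': "\<forall>x\<in>subneck_obj n. \<forall>y\<in>subneck_obj n. subneck_le n x y \<longleftrightarrow> refine_le (\<Phi> x) (\<Phi> y)"
    using ord by (simp add: OB_def)
  have top': "\<exists>t\<in>subneck_obj n. \<Phi> t = [{1..n}] \<and> (\<forall>x\<in>subneck_obj n. subneck_le n x t)"
    using top by (simp add: OB_def)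
  have minb': "bij_betw (\<lambda>\<sigma>. inv_into (subneck_obj n) \<Phi> (map (\<lambda>i. {\<sigma> i}) [1..<Suc n]))
             {\<sigma>. \<sigma> permutes {1..n}}
             {x\<in>subneck_obj n. \<forall>y\<in>subneck_obj n. subneck_le n y x \<longrightarrow> y = x}"
    using minb by (simp add: OB_def M_def)
  have E: "\<exists>\<Phi>. bij_betw \<Phi> (subneck_obj n) (ordered_partitions n)
        \<and> (\<forall>x\<in>subneck_obj n. \<forall>y\<in>subneck_obj n.
              subneck_le n x y \<longleftrightarrow> refine_le (\<Phi> x) (\<Phi> y))
        \<and> (\<exists>t\<in>subneck_obj n. \<Phi> t = [{1..n}] \<and> (\<forall>x\<in>subneck_obj n. subneck_le n x t))
        \<and> bij_betw (\<lambda>\<sigma>. inv_into (subneck_obj n) \<Phi> (map (\<lambda>i. {\<sigma> i}) [1..<Suc n]))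
             {\<sigma>. \<sigma> permutes {1..n}}
             {x\<in>subneck_obj n. \<forall>y\<in>subneck_obj n. subneck_le n y x \<longrightarrow> y = x}"
    using bij' ord' top' minb' by blast
  show ?thesis
    using thin antisym E lub unfolding OB_def by blast
qed

end
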